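(* Let $\mathcal H$ be a real Hilbert space, let $\beta\in\left]0,+\infty\right[$, let $\varepsilon\in\left]0,\min\{1/2,\beta\}\right[$, let $x_0\in\mathcal H$, let $A\colon\mathcal H\to 2^{\mathcal H}$ be maximally monotone, and let $B\colon\mathcal H\to\mathcal H$ be $\beta$-cocoercive, i.e., $\langle x-y, Bx-By\rangle\geq\beta\|Bx-By\|^2$ for all $x,y\in\mathcal H$. Let $(\gamma_n)_{n\in\mathbb N}$ be a sequence in $\left[\varepsilon,2\beta/(1+\varepsilon)\right]$, and let $(a_n)_{n\in\mathbb N}$ and $(b_n)_{n\in\mathbb N}$ be sequences in $\mathcal H$ such that $\sum_{n\in\mathbb N}\|a_n\|<+\infty$ and $\sum_{n\in\mathbb N}\|b_n\|<+\infty$. Suppose that $\mathrm{zer}(A+B)\neq\varnothing$ and, for every $n\in\mathbb N$, let $$\lambda_n\in\left[\varepsilon,(1-\varepsilon)\Big(2+\varepsilon-\frac{\gamma_n}{2\beta}\Big)\right]$$ and set $x_{n+1}=x_n+\lambda_n\big(J_{\gamma_n A}(x_n-\gamma_n(Bx_n+b_n))+a_n-x_n\big)$. Then: (i) $\sum_{n\in\mathbb N}\|J_{\gamma_n A}(x_n-\gamma_nBx_n)-x_n\|^2<+\infty$; (ii) for every $x\in\mathrm{zer}(A+B)$, $\sum_{n\in\mathbb N}\|Bx_n-Bx\|^2<+\infty$; (iii) $(x_n)_{n\in\mathbb N}$ converges weakly to a point in $\mathrm{zer}(A+B)$; (iv) suppose that one of the following holds: (a) $A$ is demiregular at every point in $\mathrm{zer}(A+B)$;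 (b) $B$ is demiregular at every point in $\mathrm{zer}(A+B)$; (c) $\mathrm{int}\,\mathrm{zer}(A+B)\neq\varnothing$. Then $(x_n)_{n\in\mathbb N}$ converges strongly to a point in $\mathrm{zer}(A+B)$.
   Context: $\mathrm{zer}\,C=\{x\mid 0\in Cx\}$, $\mathrm{dom}\,C=\{x\mid Cx\neq\varnothing\}$, $\mathrm{gra}\,C=\{(x,u)\mid u\in Cx\}$. The resolvent of $C$ is $J_C=(\mathrm{Id}+C)^{-1}$. An operator $C\colon\mathcal H\to2^{\mathcal H}$ is demiregular at $x\in\mathrm{dom}\,C$ if for every sequence $((x_n,u_n))_{n\in\mathbb N}$ in $\mathrm{gra}\,C$ and every $u\in Cx$ such that $x_n\rightharpoonup x$ (weakly) and $u_n\to u$ (strongly), one has $x_n\to x$. $\mathrm{int}$ denotes interior. *)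

theory Defs
  imports "HOL-Analysis.Analysis"
begin

definition gra :: "('a \<Rightarrow> 'b set) \<Rightarrow> ('a \<times> 'b) set" where
  "gra C = {(x, u). u \<in> C x}"

definition dom_op :: "('a \<Rightarrow> 'b set) \<Rightarrow> 'a set" where
  "dom_op C = {x. C x \<noteq> {}}"

definition zer :: "('a \<Rightarrow> 'b::zero set) \<Rightarrow> 'a set" where
  "zer C = {x. 0 \<in> C x}"

definition op_plus :: "('a \<Rightarrow> 'b::plus set) \<Rightarrow> ('a \<Rightarrow> 'b) \<Rightarrow> 'a \<Rightarrow> 'b set" where
  "op_plus A B x = (\<lambda>u. u + B x) ` A x"

definition op_scale :: "real \<Rightarrow> ('a \<Rightarrow> 'b::real_vector set) \<Rightarrow> 'a \<Rightarrow> 'b set" where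
  "op_scale \<gamma> A x = (\<lambda>u. \<gamma> *\<^sub>R u) ` A x"

definition monotone_op :: "('a::real_inner \<Rightarrow> 'a set) \<Rightarrow> bool" where
  "monotone_op C \<longleftrightarrow> (\<forall>(x, u)\<in>gra C. \<forall>(y, v)\<in>gra C. inner (x - y) (u - v) \<ge> 0)"

definition maximally_monotone :: "('a::real_inner \<Rightarrow> 'a set) \<Rightarrow> bool" where
  "maximally_monotone C \<longleftrightarrow> monotone_op C \<and>
     (\<forall>D. monotone_op D \<and> gra C \<subseteq> gra D \<longrightarrow> gra D = gra C)"

definition cocoercive :: "real \<Rightarrow> ('a::real_inner \<Rightarrow> 'a) \<Rightarrow> bool" where
  "cocoercive \<beta> B \<longleftrightarrow> (\<forall>x y. inner (x - y) (B x - B y) \<ge> \<beta> * (norm (B x - B y))\<^sup>2)"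

text \<open>Resolvent J_C = (Id + C)^{-1}, as a set-valued map, and its point-valued use
  (for maximally monotone operators the resolvent is single-valued with full domain).\<close>
definition resolvent_set :: "('a::real_vector \<Rightarrow> 'a set) \<Rightarrow> 'a \<Rightarrow> 'a set" where
  "resolvent_set C x = {p. x \<in> (\<lambda>u. p + u) ` C p}"

definition resolvent :: "('a::real_vector \<Rightarrow> 'a set) \<Rightarrow> 'a \<Rightarrow> 'a" where
  "resolvent C x = (THE p. p \<in> resolvent_set C x)"

definition weak_conv :: "(nat \<Rightarrow> 'a::real_inner) \<Rightarrow> 'a \<Rightarrow> bool" where
  "weak_conv xs x \<longleftrightarrow> (\<forall>y. (\<lambda>n. inner (xs n) y) \<longlonglongrightarrow> inner x y)"

definition demiregular_at :: "('a::real_inner \<Rightarrow> 'a set) \<Rightarrow> 'a \<Rightarrow> bool" where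
  "demiregular_at C x \<longleftrightarrow> x \<in> dom_op C \<and>
     (\<forall>xs us u. (\<forall>n. (xs n, us n) \<in> gra C) \<and> u \<in> C x \<and> weak_conv xs x \<and> us \<longlonglongrightarrow> u
        \<longrightarrow> xs \<longlonglongrightarrow> x)"

end

theory Submission
  imports Defs
begin

lemma mono_opD:
  assumes "monotone_op C" "u \<in> C x" "v \<in> C y"
  shows "0 \<le> inner (x - y) (u - v)"
  using assms unfolding monotone_op_def gra_def by fastforce

definition mmchar :: "('a::real_inner \<Rightarrow> 'a set) \<Rightarrow> bool" where
  "mmchar C \<longleftrightarrow> (\<forall>x u. (\<forall>y v. v \<in> C y \<longrightarrow> 0 \<le> inner (x - y) (u - v)) \<longrightarrow> u \<in> C x)"

lemma mm_mmchar:
  assumes "maximally_monotone C"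
  shows "mmchar C"
  unfolding mmchar_def
proof (intro allI impI)
  fix x u assume H: "\<forall>y v. v \<in> C y \<longrightarrow> 0 \<le> inner (x - y) (u - v)"
  define D where "D = (\<lambda>z. if z = x then insert u (C x) else C z)"
  have monoC: "monotone_op C" using assms maximally_monotone_def by blast
  have "monotone_op D"
    unfolding monotone_op_def gra_def
  proof (clarify)
    fix a b c d assume ab: "b \<in> D a" and cd: "d \<in> D c"
    show "0 \<le> inner (a - c) (b - d)"
    proof (cases "a = x \<and> b = u")
      case True
      then show ?thesis
      proof (cases "c = x \<and> d = u")
        case True with \<open>a = x \<and> b = u\<close> show ?thesis by simp
      next
        case False
        then have "d \<in> C c" using cd by (auto simp: D_def split: if_splits)
        with H True show ?thesis by auto
      qed
    next
      case F1: False
      then have bC: "b \<in> C a" using ab by (auto simp: D_def split: if_splits)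
      show ?thesis
      proof (cases "c = x \<and> d = u")
        case True
        have "0 \<le> inner (x - a) (u - b)" using H bC by auto
        also have "inner (x - a) (u - b) = inner (a - x) (b - u)"
          by (metis inner_minus_left inner_minus_right minus_diff_eq minus_minus)
        finally show ?thesis using True by simp
      next
        case False
        then have "d \<in> C c" using cd by (auto simp: D_def split: if_splits)
        with bC monoC show ?thesis using mono_opD by blast
      qed
    qed
  qed
  moreover have "gra C \<subseteq> gra D" by (auto simp: gra_def D_def)
  ultimately have "gra D = gra C" using assms maximally_monotone_def by blast
  moreover have "(x, u) \<in> gra D" by (simp add: gra_def D_def)
  ultimately show "u \<in> C x" by (simp add: gra_def)
qed

lemma mmcharD:
  assumes "mmchar C" "\<And>y v. v \<in> C y \<Longrightarrow> 0 \<le> inner (x - y) (u - v)"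
  shows "u \<in> C x"
  using assms unfolding mmchar_def by blast

lemma norm_mid_sq:
  fixes a b :: "'a::real_inner"
  shows "(norm ((1 - t) *\<^sub>R a + t *\<^sub>R b))\<^sup>2 = (1 - t) * (norm a)\<^sup>2 + t * (norm b)\<^sup>2 - t * (1 - t) * (norm (a - b))\<^sup>2"
  by (simp add: power2_norm_eq_inner inner_add_left inner_add_right inner_diff_left inner_diff_right
      inner_commute algebra_simps)

lemma inner_lin_combo:
  fixes a b c :: "'a::real_inner"
  shows "inner ((1 - t) *\<^sub>R a + t *\<^sub>R b) c = (1 - t) * inner a c + t * inner b c"
    "inner c ((1 - t) *\<^sub>R a + t *\<^sub>R b) = (1 - t) * inner c a + t * inner c b"
  by (simp_all add: inner_add_left inner_add_right)


lemma minty0: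
  fixes C :: "'a::{real_inner,complete_space} \<Rightarrow> 'a set"
  assumes monoC: "monotone_op C" and mmC: "mmchar C"
  shows "\<exists>p. - p \<in> C p"
proof -
  define L where "L = (\<lambda>y v x u. inner x v + inner y u - inner y (v::'a))"
  define q where "q = (\<lambda>x u. (norm (x::'a))\<^sup>2 / 2 + (norm (u::'a))\<^sup>2 / 2)"
  define ub where "ub = (\<lambda>x u c. \<forall>y v. v \<in> C y \<longrightarrow> L y v x u + q x u \<le> c)"
  define S where "S = {c. \<exists>x u. ub x u c}"
  define m where "m = Inf S"
  have lowb: "(norm (x + u))\<^sup>2 / 2 \<le> c" if "ub x u c" for x u c
  proof -
    have nq: "(norm (x + u))\<^sup>2 / 2 = inner x u + q x u"
      by (simp add: q_def power2_norm_eq_inner inner_add_left inner_add_right inner_commute)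
    show ?thesis
    proof (cases "u \<in> C x")
      case True
      then have "L x u x u + q x u \<le> c" using that ub_def by blast
      then show ?thesis by (simp add: nq L_def)
    next
      case False
      then obtain y v where yv: "v \<in> C y" "inner (x - y) (u - v) < 0"
        using mmC False unfolding mmchar_def by (meson not_le)
      have "L y v x u + q x u \<le> c" using that yv ub_def by blast
      moreover have "inner (x - y) (u - v) = inner x u - L y v x u"
        by (simp add: L_def inner_diff_left inner_diff_right inner_commute)
      ultimately show ?thesis using yv nq by linarith
    qed
  qed
  have graph_ne: "\<exists>y0 v0. v0 \<in> C y0"
  proof (rule ccontr)
    assume "\<not> ?thesis"
    then have "(0::'a) \<in> C 0" using mmC unfolding mmchar_def by blast
    with \<open>\<not> ?thesis\<close> show False by blast
  qed
  then obtain y0 v0 where y0: "v0 \<in> C y0" by blast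
  have Lmono: "L y v a b \<le> inner a b" if "v \<in> C y" "b \<in> C a" for y v a b
  proof -
    have "0 \<le> inner (a - y) (b - v)" using monoC that mono_opD by blast
    moreover have "inner (a - y) (b - v) = inner a b - L y v a b"
      by (simp add: L_def inner_diff_left inner_diff_right inner_commute)
    ultimately show ?thesis by linarith
  qed
  have "ub y0 v0 (inner y0 v0 + q y0 v0)"
    unfolding ub_def using Lmono y0 by auto
  then have Sne: "S \<noteq> {}" unfolding S_def by blast
  have Sbdd: "bdd_below S"
    unfolding S_def bdd_below_def
    by (rule exI[of _ 0]) (auto dest!: lowb intro: order_trans[rotated])
  have mle: "m \<le> c" if "ub x u c" for x u c
    unfolding m_def using that Sbdd by (auto simp: S_def intro!: cInf_lower)
  have "\<forall>n. \<exists>x u c. ub x u c \<and> c < m + 1 / (real n + 1)"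
  proof
    fix n :: nat
    have "Inf S < m + 1 / (real n + 1)" unfolding m_def by simp
    then obtain c where "c \<in> S" "c < m + 1 / (real n + 1)"
      using cInf_lessD[OF Sne] by blast
    then show "\<exists>x u c. ub x u c \<and> c < m + 1 / (real n + 1)" unfolding S_def by blast
  qed
  then obtain X U Cc where XU: "\<And>n. ub (X n) (U n) (Cc n)" "\<And>n. Cc n < m + 1 / (real n + 1)"
    by metis
  have Lmid: "L y v ((1 - t) *\<^sub>R a + t *\<^sub>R a') ((1 - t) *\<^sub>R b + t *\<^sub>R b') = (1 - t) * L y v a b + t * L y v a' b'"
    for y v a b a' b' and t :: real
    by (simp add: L_def inner_add_left inner_add_right algebra_simps)
  have qmid: "q ((1 - t) *\<^sub>R a + t *\<^sub>R a') ((1 - t) *\<^sub>R b + t *\<^sub>R b')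
       = (1 - t) * q a b + t * q a' b' - t * (1 - t) * ((norm (a - a'))\<^sup>2 + (norm (b - b'))\<^sup>2) / 2"
    for a b a' b' :: 'a and t :: real
    unfolding q_def norm_mid_sq[of t a a'] norm_mid_sq[of t b b'] by (simp add: field_simps)
  have ubmid: "ub ((1 - t) *\<^sub>R a + t *\<^sub>R a') ((1 - t) *\<^sub>R b + t *\<^sub>R b')
       ((1 - t) * c + t * c' - t * (1 - t) * ((norm (a - a'))\<^sup>2 + (norm (b - b'))\<^sup>2) / 2)"
    if "ub a b c" "ub a' b' c'" "0 \<le> t" "t \<le> 1" for a b a' b' c c' and t :: real
    unfolding ub_def
  proof (intro allI impI)
    fix y v assume yv: "v \<in> C y"
    have 1: "L y v a b + q a b \<le> c" "L y v a' b' + q a' b' \<le> c'" using that yv ub_def by auto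
    have "(1 - t) * (L y v a b + q a b) \<le> (1 - t) * c" using 1 that by (intro mult_left_mono) auto
    moreover have "t * (L y v a' b' + q a' b') \<le> t * c'" using 1 that by (intro mult_left_mono) auto
    ultimately show "L y v ((1 - t) *\<^sub>R a + t *\<^sub>R a') ((1 - t) *\<^sub>R b + t *\<^sub>R b') +
        q ((1 - t) *\<^sub>R a + t *\<^sub>R a') ((1 - t) *\<^sub>R b + t *\<^sub>R b')
        \<le> (1 - t) * c + t * c' - t * (1 - t) * ((norm (a - a'))\<^sup>2 + (norm (b - b'))\<^sup>2) / 2"
      unfolding Lmid qmid by (simp add: algebra_simps)
  qed
  have cauchy_est: "(norm (X j - X k))\<^sup>2 + (norm (U j - U k))\<^sup>2 \<le> 4 * (1 / (real j + 1) + 1 / (real k + 1))" for j k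
  proof -
    have "ub ((1 - 1/2) *\<^sub>R X j + (1/2) *\<^sub>R X k) ((1 - 1/2) *\<^sub>R U j + (1/2) *\<^sub>R U k)
       ((1 - 1/2) * Cc j + (1/2) * Cc k - (1/2) * (1 - 1/2) * ((norm (X j - X k))\<^sup>2 + (norm (U j - U k))\<^sup>2) / 2)"
      by (rule ubmid) (use XU in auto)
    then have "m \<le> (1 - 1/2) * Cc j + (1/2) * Cc k - (1/2) * (1 - 1/2) * ((norm (X j - X k))\<^sup>2 + (norm (U j - U k))\<^sup>2) / 2"
      by (rule mle)
    then have "m \<le> Cc j / 2 + Cc k / 2 - ((norm (X j - X k))\<^sup>2 + (norm (U j - U k))\<^sup>2) / 8"
      by simp
    moreover have "Cc j < m + 1 / (real j + 1)" "Cc k < m + 1 / (real k + 1)" using XU(2) by auto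
    ultimately show ?thesis
      by argo
  qed
  have small: "\<forall>e>0. \<exists>N. \<forall>j\<ge>N. \<forall>k\<ge>N. (norm (X j - X k))\<^sup>2 + (norm (U j - U k))\<^sup>2 < e"
  proof (intro allI impI)
    fix e :: real assume "e > 0"
    obtain N :: nat where N: "8 / e < real N" using reals_Archimedean2 by blast
    have "N > 0" using N \<open>e > 0\<close> by (cases N) (auto simp: field_simps)
    show "\<exists>N. \<forall>j\<ge>N. \<forall>k\<ge>N. (norm (X j - X k))\<^sup>2 + (norm (U j - U k))\<^sup>2 < e"
    proof (intro exI allI impI)
      fix j k assume "N \<le> j" "N \<le> k"
      have "1 / (real j + 1) \<le> 1 / real N" using \<open>N \<le> j\<close> \<open>N > 0\<close> by (intro divide_left_mono) auto
      moreover have "1 / (real k + 1) \<le> 1 / real N" using \<open>N \<le> k\<close> \<open>N > 0\<close> by (intro divide_left_mono) auto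
      moreover have "8 / real N < e" using N \<open>e > 0\<close> \<open>N > 0\<close> by (simp add: field_simps)
      moreover have "8 / real N = 8 * (1 / real N)" by simp
      ultimately show "(norm (X j - X k))\<^sup>2 + (norm (U j - U k))\<^sup>2 < e"
        using cauchy_est[of j k] by argo
    qed
  qed
  have CX: "Cauchy X" and CU: "Cauchy U"
  proof -
    show "Cauchy X" unfolding Cauchy_def
    proof (intro allI impI)
      fix e :: real assume "e > 0"
      then obtain N where N: "\<forall>j\<ge>N. \<forall>k\<ge>N. (norm (X j - X k))\<^sup>2 + (norm (U j - U k))\<^sup>2 < e\<^sup>2"
        using small by (meson zero_less_power)
      show "\<exists>M. \<forall>j\<ge>M. \<forall>k\<ge>M. dist (X j) (X k) < e"
      proof (intro exI allI impI)
        fix j k assume "N \<le> j" "N \<le> k"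
        then have "(norm (X j - X k))\<^sup>2 < e\<^sup>2" using N[rule_format, of j k]
          by (smt (verit) zero_le_power2)
        then show "dist (X j) (X k) < e" using \<open>e > 0\<close>
          by (simp add: dist_norm power_less_imp_less_base)
      qed
    qed
    show "Cauchy U" unfolding Cauchy_def
    proof (intro allI impI)
      fix e :: real assume "e > 0"
      then obtain N where N: "\<forall>j\<ge>N. \<forall>k\<ge>N. (norm (X j - X k))\<^sup>2 + (norm (U j - U k))\<^sup>2 < e\<^sup>2"
        using small by (meson zero_less_power)
      show "\<exists>M. \<forall>j\<ge>M. \<forall>k\<ge>M. dist (U j) (U k) < e"
      proof (intro exI allI impI)
        fix j k assume "N \<le> j" "N \<le> k"
        then have "(norm (U j - U k))\<^sup>2 < e\<^sup>2" using N[rule_format, of j k]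
          by (smt (verit) zero_le_power2)
        then show "dist (U j) (U k) < e" using \<open>e > 0\<close>
          by (simp add: dist_norm power_less_imp_less_base)
      qed
    qed
  qed
  obtain xb where xb: "X \<longlonglongrightarrow> xb" using CX convergent_eq_Cauchy by blast
  obtain ubar where ubar: "U \<longlonglongrightarrow> ubar" using CU convergent_eq_Cauchy by blast
  have Cc_lim: "Cc \<longlonglongrightarrow> m"
  proof -
    have u: "(\<lambda>n. m + 1 / (real n + 1)) \<longlonglongrightarrow> m"
      using LIMSEQ_inverse_real_of_nat_add[of m] by (simp add: inverse_eq_divide add.commute)
    show ?thesis
      by (rule tendsto_sandwich[OF _ _ tendsto_const u])
        (use XU(2) mle[OF XU(1)] in \<open>auto intro!: always_eventually dest: less_imp_le\<close>)
  qed
  have ubbar: "ub xb ubar m"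
    unfolding ub_def
  proof (intro allI impI)
    fix y v assume yv: "v \<in> C y"
    have "(\<lambda>n. L y v (X n) (U n) + q (X n) (U n)) \<longlonglongrightarrow> L y v xb ubar + q xb ubar"
      unfolding L_def q_def by (intro tendsto_intros xb ubar) auto
    moreover have "\<And>n. L y v (X n) (U n) + q (X n) (U n) \<le> Cc n" using XU(1) yv ub_def by blast
    ultimately show "L y v xb ubar + q xb ubar \<le> m"
      using Cc_lim by (intro LIMSEQ_le) auto
  qed
  have key: "(norm (xb + ubar))\<^sup>2 \<le> inner (y + ubar) (v + xb)" if yv: "v \<in> C y" for y v
  proof -
    define K where "K = inner y v + q y v"
    define Dl where "Dl = ((norm (xb - y))\<^sup>2 + (norm (ubar - v))\<^sup>2) / 2"
    have Dl0: "0 \<le> Dl" unfolding Dl_def by simp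
    have tineq: "m \<le> K - (1 - t) * Dl" if "0 < t" "t \<le> 1" for t :: real
    proof -
      have "ub y v K" unfolding ub_def K_def using Lmono yv by auto
      then have "ub ((1 - t) *\<^sub>R xb + t *\<^sub>R y) ((1 - t) *\<^sub>R ubar + t *\<^sub>R v)
          ((1 - t) * m + t * K - t * (1 - t) * ((norm (xb - y))\<^sup>2 + (norm (ubar - v))\<^sup>2) / 2)"
        using ubmid[OF ubbar] that by auto
      then have "m \<le> (1 - t) * m + t * K - t * (1 - t) * ((norm (xb - y))\<^sup>2 + (norm (ubar - v))\<^sup>2) / 2"
        by (rule mle)
      then have "t * m \<le> t * (K - (1 - t) * Dl)" by (simp add: Dl_def algebra_simps)
      then show ?thesis using that by simp
    qed
    have mK: "m \<le> K - Dl"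
    proof (rule ccontr)
      assume "\<not> m \<le> K - Dl"
      define d where "d = m - (K - Dl)"
      have d0: "d > 0" using \<open>\<not> m \<le> K - Dl\<close> d_def by simp
      define t where "t = min 1 (d / (Dl + 1))"
      have t0: "0 < t" "t \<le> 1" using d0 Dl0 by (auto simp: t_def)
      have "t * Dl < d"
      proof -
        have "t * Dl \<le> d / (Dl + 1) * Dl" using Dl0 by (intro mult_right_mono) (auto simp: t_def)
        also have "\<dots> < d" using d0 Dl0 by (simp add: field_simps)
        finally show ?thesis .
      qed
      with tineq[OF t0] show False unfolding d_def by (simp add: algebra_simps)
    qed
    have mlow: "(norm (xb + ubar))\<^sup>2 / 2 \<le> m" using lowb[OF ubbar] .
    have e1: "K - Dl = inner y v + inner y xb - (norm xb)\<^sup>2 / 2 + inner v ubar - (norm ubar)\<^sup>2 / 2"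
      unfolding K_def Dl_def q_def
      by (simp add: power2_norm_eq_inner inner_diff_left inner_diff_right inner_commute field_simps)
    have e2: "inner (y + ubar) (v + xb) = inner y v + inner y xb + inner v ubar + inner xb ubar"
      by (simp add: inner_add_left inner_add_right inner_commute)
    have e3: "(norm (xb + ubar))\<^sup>2 = (norm xb)\<^sup>2 + (norm ubar)\<^sup>2 + 2 * inner xb ubar"
      by (simp add: power2_norm_eq_inner inner_add_left inner_add_right inner_commute)
    show ?thesis using mK mlow e1 e2 e3 by linarith
  qed
  have inC: "- xb \<in> C (- ubar)"
  proof (rule mmcharD[OF mmC])
    fix y v assume "v \<in> C y"
    then have "0 \<le> inner (y + ubar) (v + xb)" using key[of v y] by (meson order_trans zero_le_power2)
    also have "inner (y + ubar) (v + xb) = inner (- ubar - y) (- xb - v)"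
      by (metis (no_types, lifting) add.commute diff_minus_eq_add inner_minus_left inner_minus_right minus_diff_eq minus_minus)
    finally show "0 \<le> inner (- ubar - y) (- xb - v)" .
  qed
  have "(norm (xb + ubar))\<^sup>2 \<le> inner (- ubar + ubar) (- xb + xb)" using key[OF inC] .
  then have "xb + ubar = 0" by simp
  then have "- ubar = xb" by (simp add: add_eq_0_iff)
  with inC show ?thesis by auto
qed


lemma minty_scaled:
  fixes A :: "'a::{real_inner,complete_space} \<Rightarrow> 'a set"
  assumes mm: "maximally_monotone A" and g: "\<gamma> > 0"
  shows "\<exists>a u. u \<in> A a \<and> p = a + \<gamma> *\<^sub>R u"
proof -
  have monoA: "monotone_op A" using mm maximally_monotone_def by blast
  have mmA: "mmchar A" using mm mm_mmchar by blast
  define C where "C = (\<lambda>x. (\<lambda>u. \<gamma> *\<^sub>R u - p) ` A x)"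
  have "monotone_op C"
    unfolding monotone_op_def gra_def C_def
  proof (clarify)
    fix x y u v assume "u \<in> A x" "v \<in> A y"
    then have "0 \<le> inner (x - y) (u - v)" using monoA mono_opD by blast
    then show "0 \<le> inner (x - y) (\<gamma> *\<^sub>R u - p - (\<gamma> *\<^sub>R v - p))"
      using g by (simp add: scaleR_diff_right[symmetric])
  qed
  moreover have "mmchar C"
    unfolding mmchar_def
  proof (intro allI impI)
    fix x w assume H: "\<forall>y v. v \<in> C y \<longrightarrow> 0 \<le> inner (x - y) (w - v)"
    define u where "u = (1 / \<gamma>) *\<^sub>R (w + p)"
    have wu: "w = \<gamma> *\<^sub>R u - p" using g by (simp add: u_def)
    have "u \<in> A x"
    proof (rule mmcharD[OF mmA])
      fix y v assume "v \<in> A y"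
      then have "0 \<le> inner (x - y) (w - (\<gamma> *\<^sub>R v - p))" using H by (auto simp: C_def)
      also have "w - (\<gamma> *\<^sub>R v - p) = \<gamma> *\<^sub>R (u - v)" by (simp add: wu algebra_simps)
      finally show "0 \<le> inner (x - y) (u - v)" using g
        by (simp add: zero_le_mult_iff)
    qed
    then show "w \<in> C x" by (auto simp: C_def wu)
  qed
  ultimately obtain x where "- x \<in> C x" using minty0 by blast
  then obtain u where "u \<in> A x" "- x = \<gamma> *\<^sub>R u - p" by (auto simp: C_def)
  then show ?thesis by (intro exI[of _ x] exI[of _ u]) (auto simp: algebra_simps)
qed

lemma res_unique:
  fixes A :: "'a::real_inner \<Rightarrow> 'a set"
  assumes monoA: "monotone_op A" and g: "\<gamma> > 0"
    and "u \<in> A a" "p = a + \<gamma> *\<^sub>R u" "v \<in> A b" "p = b + \<gamma> *\<^sub>R v"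
  shows "a = b"
proof -
  have "0 \<le> inner (a - b) (u - v)" using assms mono_opD by blast
  moreover have "a - b = \<gamma> *\<^sub>R (v - u)" using assms by (simp add: algebra_simps)
  ultimately have "0 \<le> \<gamma> * inner (v - u) (u - v)" by simp
  then have "0 \<le> inner (v - u) (u - v)" using g by (simp add: zero_le_mult_iff)
  moreover have "inner (v - u) (u - v) = - (norm (u - v))\<^sup>2"
    by (metis inner_minus_left minus_diff_eq power2_norm_eq_inner)
  ultimately have "u = v" by simp
  then show ?thesis using assms by simp
qed

lemma res_char:
  fixes A :: "'a::{real_inner,complete_space} \<Rightarrow> 'a set"
  assumes mm: "maximally_monotone A" and g: "\<gamma> > 0"
  shows "resolvent (op_scale \<gamma> A) p = a \<longleftrightarrow> (\<exists>u\<in>A a. p = a + \<gamma> *\<^sub>R u)"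
proof -
  have monoA: "monotone_op A" using mm maximally_monotone_def by blast
  have rs: "a' \<in> resolvent_set (op_scale \<gamma> A) p \<longleftrightarrow> (\<exists>u\<in>A a'. p = a' + \<gamma> *\<^sub>R u)" for a'
    by (auto simp: resolvent_set_def op_scale_def image_iff)
  obtain a0 u0 where a0: "u0 \<in> A a0" "p = a0 + \<gamma> *\<^sub>R u0" using minty_scaled[OF mm g] by blast
  have ex1: "\<exists>!a'. a' \<in> resolvent_set (op_scale \<gamma> A) p"
  proof
    show "a0 \<in> resolvent_set (op_scale \<gamma> A) p" using a0 rs by blast
    fix a' assume "a' \<in> resolvent_set (op_scale \<gamma> A) p"
    then obtain u' where "u' \<in> A a'" "p = a' + \<gamma> *\<^sub>R u'" using rs by blast
    then show "a' = a0" using res_unique[OF monoA g] a0 by blast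
  qed
  have "resolvent (op_scale \<gamma> A) p \<in> resolvent_set (op_scale \<gamma> A) p"
    unfolding resolvent_def using theI'[OF ex1] .
  then show ?thesis using ex1 rs by blast
qed

lemma res_mem:
  fixes A :: "'a::{real_inner,complete_space} \<Rightarrow> 'a set"
  assumes mm: "maximally_monotone A" and g: "\<gamma> > 0"
  shows "(1 / \<gamma>) *\<^sub>R (p - resolvent (op_scale \<gamma> A) p) \<in> A (resolvent (op_scale \<gamma> A) p)"
proof -
  obtain u where u: "u \<in> A (resolvent (op_scale \<gamma> A) p)" "p = resolvent (op_scale \<gamma> A) p + \<gamma> *\<^sub>R u"
    using res_char[OF mm g] by blast
  then have "p - resolvent (op_scale \<gamma> A) p = \<gamma> *\<^sub>R u" by (simp add: algebra_simps)
  then have "(1 / \<gamma>) *\<^sub>R (p - resolvent (op_scale \<gamma> A) p) = u" using g by simp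
  then show ?thesis using u by simp
qed

lemma res_firm:
  fixes A :: "'a::{real_inner,complete_space} \<Rightarrow> 'a set"
  assumes mm: "maximally_monotone A" and g: "\<gamma> > 0"
  shows "(norm (resolvent (op_scale \<gamma> A) p - resolvent (op_scale \<gamma> A) q))\<^sup>2
     \<le> inner (resolvent (op_scale \<gamma> A) p - resolvent (op_scale \<gamma> A) q) (p - q)"
proof -
  define a where "a = resolvent (op_scale \<gamma> A) p"
  define b where "b = resolvent (op_scale \<gamma> A) q"
  have monoA: "monotone_op A" using mm maximally_monotone_def by blast
  have "0 \<le> inner (a - b) ((1 / \<gamma>) *\<^sub>R (p - a) - (1 / \<gamma>) *\<^sub>R (q - b))"
    using mono_opD[OF monoA res_mem[OF mm g, of p] res_mem[OF mm g, of q]] by (simp add: a_def b_def)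
  also have "(1 / \<gamma>) *\<^sub>R (p - a) - (1 / \<gamma>) *\<^sub>R (q - b) = (1 / \<gamma>) *\<^sub>R ((p - q) - (a - b))"
    by (simp add: algebra_simps)
  finally have "0 \<le> inner (a - b) ((p - q) - (a - b)) / \<gamma>" by simp
  then have "0 \<le> inner (a - b) ((p - q) - (a - b))" using g by (simp add: zero_le_divide_iff)
  then show ?thesis unfolding a_def[symmetric] b_def[symmetric]
    by (simp add: inner_diff_right power2_norm_eq_inner)
qed

lemma res_nonexp:
  fixes A :: "'a::{real_inner,complete_space} \<Rightarrow> 'a set"
  assumes mm: "maximally_monotone A" and g: "\<gamma> > 0"
  shows "norm (resolvent (op_scale \<gamma> A) p - resolvent (op_scale \<gamma> A) q) \<le> norm (p - q)"
proof -
  define d where "d = resolvent (op_scale \<gamma> A) p - resolvent (op_scale \<gamma> A) q"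
  have "(norm d)\<^sup>2 \<le> inner d (p - q)" using res_firm[OF mm g] by (simp add: d_def)
  also have "\<dots> \<le> norm d * norm (p - q)" by (rule norm_cauchy_schwarz)
  finally have "norm d * norm d \<le> norm d * norm (p - q)" by (simp add: power2_eq_square)
  then show ?thesis unfolding d_def[symmetric]
    by (metis mult_le_cancel_left norm_ge_zero order.trans linorder_not_le mult_zero_left)
qed


lemma step_ineq:
  fixes d e g :: "'a::real_inner"
  assumes firm: "(norm e)\<^sup>2 \<le> inner e (d - \<gamma> *\<^sub>R g)"
    and coco: "\<beta> * (norm g)\<^sup>2 \<le> inner d g"
    and b: "0 < \<beta>" and ep: "0 < \<epsilon>" "\<epsilon> \<le> 1"
    and ga: "\<epsilon> \<le> \<gamma>" "\<gamma> \<le> 2 * \<beta>"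
    and la: "\<epsilon> \<le> l" "l \<le> (1 - \<epsilon>) * (2 + \<epsilon> - \<gamma> / (2 * \<beta>))"
  shows "(norm ((1 - l) *\<^sub>R d + l *\<^sub>R e))\<^sup>2
     \<le> (norm d)\<^sup>2 - \<epsilon> ^ 3 / 2 * (norm (e - d))\<^sup>2 - \<beta> * \<epsilon> ^ 4 / 2 * (norm g)\<^sup>2"
proof -
  define D where "D = (norm d)\<^sup>2"
  define E where "E = (norm e)\<^sup>2"
  define R where "R = (norm (e - d))\<^sup>2"
  define G where "G = (norm g)\<^sup>2"
  define de where "de = inner d e"
  define eg where "eg = inner e g"
  define dg where "dg = inner d g"
  define rg where "rg = inner (e - d) g"
  define Q where "Q = (norm ((1 - l) *\<^sub>R d + l *\<^sub>R e))\<^sup>2"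
  define \<mu> where "\<mu> = \<gamma> / (2 * \<beta>) + \<epsilon>\<^sup>2 / 2"
  have g0: "\<gamma> > 0" using ep ga by linarith
  have mu0: "\<mu> > 0" unfolding \<mu>_def using g0 b ep by (simp add: add_pos_pos)
  have R0: "R \<ge> 0" and G0: "G \<ge> 0" by (simp_all add: R_def G_def)
  have l0: "l \<ge> 0" using la ep by linarith
  have Qeq: "Q = (1 - l) * D + l * E - l * (1 - l) * R"
  proof -
    have "norm (d - e) = norm (e - d)" by (rule norm_minus_commute)
    then show ?thesis unfolding Q_def D_def E_def R_def norm_mid_sq by simp
  qed
  have Req: "R = E + D - 2 * de"
    unfolding R_def E_def D_def de_def
    by (simp add: power2_norm_eq_inner inner_diff_left inner_diff_right inner_commute)
  have rgeq: "rg = eg - dg" unfolding rg_def eg_def dg_def by (simp add: inner_diff_left)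
  have f1: "E \<le> de - \<gamma> * eg" using firm
    by (simp add: E_def de_def eg_def inner_diff_right inner_commute)
  have f2: "E \<le> D - R - 2 * \<gamma> * \<beta> * G - 2 * \<gamma> * rg"
  proof -
    have "\<gamma> * (\<beta> * G) \<le> \<gamma> * dg" using coco g0 by (simp add: G_def dg_def)
    moreover have "\<gamma> * eg = \<gamma> * dg + \<gamma> * rg" by (simp add: rgeq algebra_simps)
    moreover have "2 * \<gamma> * \<beta> * G = 2 * (\<gamma> * (\<beta> * G))" "2 * \<gamma> * rg = 2 * (\<gamma> * rg)" by simp_all
    ultimately show ?thesis using f1 Req by argo
  qed
  have f3: "l * E \<le> l * (D - R - 2 * \<gamma> * \<beta> * G - 2 * \<gamma> * rg)"
    using f2 l0 by (rule mult_left_mono)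
  have Q1: "Q \<le> D - l * (2 - l) * R - 2 * l * \<gamma> * \<beta> * G - 2 * l * \<gamma> * rg"
    using Qeq f3 by (simp add: algebra_simps)
  have young0: "0 \<le> \<mu>\<^sup>2 * R + 2 * \<mu> * \<gamma> * rg + \<gamma>\<^sup>2 * G"
  proof -
    have "0 \<le> (norm (\<mu> *\<^sub>R (e - d) + \<gamma> *\<^sub>R g))\<^sup>2" by simp
    also have "\<dots> = \<mu>\<^sup>2 * R + 2 * \<mu> * \<gamma> * rg + \<gamma>\<^sup>2 * G"
      unfolding R_def rg_def G_def
      by (simp add: power2_norm_eq_inner inner_add_left inner_add_right inner_diff_left inner_diff_right inner_commute)
        (simp add: algebra_simps power2_eq_square)
    finally show ?thesis .
  qed
  have young: "- 2 * \<gamma> * rg \<le> \<mu> * R + \<gamma>\<^sup>2 / \<mu> * G"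
  proof -
    have "\<mu> * (- 2 * \<gamma> * rg) \<le> \<mu> * (\<mu> * R + \<gamma>\<^sup>2 / \<mu> * G)"
      using young0 mu0 by (simp add: algebra_simps power2_eq_square)
    then show ?thesis using mu0 by (simp only: mult_le_cancel_left_pos)
  qed
  have Q2: "Q \<le> D - l * (2 - l - \<mu>) * R - l * (2 * \<gamma> * \<beta> - \<gamma>\<^sup>2 / \<mu>) * G"
  proof -
    have "l * (- 2 * \<gamma> * rg) \<le> l * (\<mu> * R + \<gamma>\<^sup>2 / \<mu> * G)" using young l0 by (rule mult_left_mono)
    then show ?thesis using Q1 by (simp add: algebra_simps)
  qed
  have c1: "\<epsilon> ^ 3 / 2 \<le> l * (2 - l - \<mu>)"
  proof -
    have "(1 - \<epsilon>) * (2 + \<epsilon> - \<gamma> / (2 * \<beta>)) = 2 - \<epsilon> - \<epsilon>\<^sup>2 - \<gamma> / (2 * \<beta>) + \<epsilon> * (\<gamma> / (2 * \<beta>))"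
      by (simp only: algebra_simps power2_eq_square)
    then have "l \<le> 2 - \<epsilon> - \<epsilon>\<^sup>2 - \<gamma> / (2 * \<beta>) + \<epsilon> * (\<gamma> / (2 * \<beta>))"
      using la(2) by simp
    moreover have "\<gamma> / (2 * \<beta>) \<le> 1" using ga b by simp
    moreover have "\<epsilon> * (\<gamma> / (2 * \<beta>)) \<le> \<epsilon> * 1" using calculation(2) ep by (intro mult_left_mono) auto
    ultimately have "\<epsilon>\<^sup>2 / 2 \<le> 2 - l - \<mu>" unfolding \<mu>_def by simp
    then have "\<epsilon> * (\<epsilon>\<^sup>2 / 2) \<le> l * (2 - l - \<mu>)" using la(1) ep
      by (intro mult_mono) auto
    then show ?thesis by (simp add: power2_eq_square power3_eq_cube)
  qed
  have c2: "\<beta> * \<epsilon> ^ 4 / 2 \<le> l * (2 * \<gamma> * \<beta> - \<gamma>\<^sup>2 / \<mu>)"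
  proof -
    have e2: "\<epsilon>\<^sup>2 \<le> 1" using ep by (simp add: power_le_one)
    have "\<gamma> \<le> \<mu> * (2 * \<beta> - \<beta> * \<epsilon>\<^sup>2 / 2)"
    proof -
      have "\<mu> * (2 * \<beta> - \<beta> * \<epsilon>\<^sup>2 / 2) = (\<gamma> + \<beta> * \<epsilon>\<^sup>2) * (1 - \<epsilon>\<^sup>2 / 4)"
        unfolding \<mu>_def using b by (simp add: field_simps)
      also have "\<dots> = \<gamma> + \<epsilon>\<^sup>2 * (\<beta> - \<gamma> / 4 - \<beta> * \<epsilon>\<^sup>2 / 4)" by (simp add: algebra_simps)
      also have "\<dots> \<ge> \<gamma>"
      proof -
        have "\<beta> * \<epsilon>\<^sup>2 \<le> \<beta> * 1" using e2 b by (intro mult_left_mono) auto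
        then have "0 \<le> \<beta> - \<gamma> / 4 - \<beta> * \<epsilon>\<^sup>2 / 4" using ga b by linarith
        then show ?thesis by simp
      qed
      finally show ?thesis .
    qed
    then have "\<gamma> / \<mu> \<le> 2 * \<beta> - \<beta> * \<epsilon>\<^sup>2 / 2" using mu0 by (simp add: divide_le_eq mult.commute)
    then have h: "\<beta> * \<epsilon>\<^sup>2 / 2 \<le> 2 * \<beta> - \<gamma> / \<mu>" by simp
    have "2 * \<gamma> * \<beta> - \<gamma>\<^sup>2 / \<mu> = \<gamma> * (2 * \<beta> - \<gamma> / \<mu>)" by (simp add: algebra_simps power2_eq_square)
    moreover have "\<epsilon> * (\<beta> * \<epsilon>\<^sup>2 / 2) \<le> \<gamma> * (2 * \<beta> - \<gamma> / \<mu>)"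
      using h ga ep b by (intro mult_mono) auto
    ultimately have h2: "\<epsilon> * (\<beta> * \<epsilon>\<^sup>2 / 2) \<le> 2 * \<gamma> * \<beta> - \<gamma>\<^sup>2 / \<mu>" by simp
    have "\<epsilon> * (\<epsilon> * (\<beta> * \<epsilon>\<^sup>2 / 2)) \<le> l * (2 * \<gamma> * \<beta> - \<gamma>\<^sup>2 / \<mu>)"
      using h2 la ep b by (intro mult_mono) auto
    then show ?thesis by (simp add: power2_eq_square power4_eq_xxxx algebra_simps)
  qed
  have "\<epsilon> ^ 3 / 2 * R \<le> l * (2 - l - \<mu>) * R" using c1 R0 by (rule mult_right_mono)
  moreover have "\<beta> * \<epsilon> ^ 4 / 2 * G \<le> l * (2 * \<gamma> * \<beta> - \<gamma>\<^sup>2 / \<mu>) * G" using c2 G0 by (rule mult_right_mono)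
  ultimately show ?thesis using Q2 unfolding Q_def D_def R_def G_def by linarith
qed


lemma res_gamma_mono:
  fixes A :: "'a::{real_inner,complete_space} \<Rightarrow> 'a set"
  assumes mm: "maximally_monotone A" and g1: "0 < \<gamma>1" and g12: "\<gamma>1 \<le> \<gamma>2"
  shows "norm (x - resolvent (op_scale \<gamma>1 A) (x - \<gamma>1 *\<^sub>R w))
       \<le> norm (x - resolvent (op_scale \<gamma>2 A) (x - \<gamma>2 *\<^sub>R w))"
proof -
  have g2: "0 < \<gamma>2" using g1 g12 by linarith
  have monoA: "monotone_op A" using mm maximally_monotone_def by blast
  define y1 where "y1 = resolvent (op_scale \<gamma>1 A) (x - \<gamma>1 *\<^sub>R w)"
  define y2 where "y2 = resolvent (op_scale \<gamma>2 A) (x - \<gamma>2 *\<^sub>R w)"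
  define h1 where "h1 = (1 / \<gamma>1) *\<^sub>R (x - y1)"
  define h2 where "h2 = (1 / \<gamma>2) *\<^sub>R (x - y2)"
  have u1: "h1 - w \<in> A y1"
  proof -
    have "(1 / \<gamma>1) *\<^sub>R ((x - \<gamma>1 *\<^sub>R w) - y1) \<in> A y1" using res_mem[OF mm g1] by (simp add: y1_def)
    also have "(1 / \<gamma>1) *\<^sub>R ((x - \<gamma>1 *\<^sub>R w) - y1) = h1 - w" using g1 by (simp add: h1_def algebra_simps)
    finally show ?thesis .
  qed
  have u2: "h2 - w \<in> A y2"
  proof -
    have "(1 / \<gamma>2) *\<^sub>R ((x - \<gamma>2 *\<^sub>R w) - y2) \<in> A y2" using res_mem[OF mm g2] by (simp add: y2_def)
    also have "(1 / \<gamma>2) *\<^sub>R ((x - \<gamma>2 *\<^sub>R w) - y2) = h2 - w" using g2 by (simp add: h2_def algebra_simps)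
    finally show ?thesis .
  qed
  have xy1: "x - y1 = \<gamma>1 *\<^sub>R h1" using g1 by (simp add: h1_def)
  have xy2: "x - y2 = \<gamma>2 *\<^sub>R h2" using g2 by (simp add: h2_def)
  have "0 \<le> inner (y1 - y2) ((h1 - w) - (h2 - w))" using mono_opD[OF monoA u1 u2] .
  also have "y1 - y2 = \<gamma>2 *\<^sub>R h2 - \<gamma>1 *\<^sub>R h1" using xy1 xy2 by (simp add: algebra_simps)
  finally have "0 \<le> inner (\<gamma>2 *\<^sub>R h2 - \<gamma>1 *\<^sub>R h1) (h1 - h2)" by simp
  then have "\<gamma>1 * (norm h1)\<^sup>2 + \<gamma>2 * (norm h2)\<^sup>2 \<le> (\<gamma>1 + \<gamma>2) * inner h1 h2"
    by (simp add: inner_diff_left inner_diff_right power2_norm_eq_inner inner_commute algebra_simps)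
  also have "\<dots> \<le> (\<gamma>1 + \<gamma>2) * (norm h1 * norm h2)"
    using g1 g2 by (intro mult_left_mono norm_cauchy_schwarz) auto
  finally have key: "\<gamma>1 * (norm h1)\<^sup>2 + \<gamma>2 * (norm h2)\<^sup>2 \<le> (\<gamma>1 + \<gamma>2) * (norm h1 * norm h2)" .
  have "\<gamma>1 * norm h1 \<le> \<gamma>2 * norm h2"
  proof (rule ccontr)
    assume "\<not> ?thesis"
    then have lt: "\<gamma>2 * norm h2 < \<gamma>1 * norm h1" by simp
    have "\<gamma>1 * norm h2 \<le> \<gamma>2 * norm h2" using g12 by (intro mult_right_mono) auto
    then have "\<gamma>1 * norm h2 < \<gamma>1 * norm h1" using lt by linarith
    then have "norm h2 < norm h1" using g1 by simp
    then have "0 < (norm h1 - norm h2) * (\<gamma>1 * norm h1 - \<gamma>2 * norm h2)"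
      using lt by (intro mult_pos_pos) auto
    also have "\<dots> = \<gamma>1 * (norm h1)\<^sup>2 + \<gamma>2 * (norm h2)\<^sup>2 - (\<gamma>1 + \<gamma>2) * (norm h1 * norm h2)"
      by (simp add: algebra_simps power2_eq_square)
    finally show False using key by linarith
  qed
  then show ?thesis
    unfolding y1_def[symmetric] y2_def[symmetric] xy1 xy2 using g1 g2 by simp
qed


definition lsup :: "(nat \<Rightarrow> real) \<Rightarrow> real" where
  "lsup f = Inf {M. eventually (\<lambda>n. f n \<le> M) sequentially}"

definition bnd :: "(nat \<Rightarrow> real) \<Rightarrow> bool" where
  "bnd f \<longleftrightarrow> (\<forall>n. 0 \<le> f n) \<and> (\<exists>K. \<forall>n. f n \<le> K)"

lemma lsup_set_bdd:
  fixes f :: "nat \<Rightarrow> real"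
  assumes "\<And>n. 0 \<le> f n"
  shows "bdd_below {M. eventually (\<lambda>n. f n \<le> M) sequentially}"
  unfolding bdd_below_def
proof (intro exI[of _ 0] ballI)
  fix M assume "M \<in> {M. eventually (\<lambda>n. f n \<le> M) sequentially}"
  then obtain N where "\<forall>n\<ge>N. f n \<le> M" by (auto simp: eventually_sequentially)
  then have "f N \<le> M" by simp
  then show "0 \<le> M" using assms[of N] by linarith
qed

lemma lsup_le:
  assumes "\<And>n. 0 \<le> f n" "eventually (\<lambda>n. f n \<le> M) sequentially"
  shows "lsup f \<le> M"
  unfolding lsup_def using assms lsup_set_bdd[of f] by (intro cInf_lower) auto

lemma lsup_le_eps:
  assumes "\<And>n. 0 \<le> f n" "\<And>\<delta>. \<delta> > 0 \<Longrightarrow> eventually (\<lambda>n. f n \<le> M + \<delta>) sequentially"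
  shows "lsup f \<le> M"
proof (rule field_le_epsilon)
  fix \<delta> :: real assume "0 < \<delta>"
  show "lsup f \<le> M + \<delta>" by (rule lsup_le[OF assms(1) assms(2)[OF \<open>0 < \<delta>\<close>]])
qed

lemma lsup_ev:
  assumes "bnd f" "\<delta> > 0"
  shows "eventually (\<lambda>n. f n \<le> lsup f + \<delta>) sequentially"
proof -
  obtain K where K: "\<And>n. f n \<le> K" using assms(1) bnd_def by blast
  have ne: "{M. eventually (\<lambda>n. f n \<le> M) sequentially} \<noteq> {}"
    using K by (auto intro!: exI[of _ K])
  have "Inf {M. eventually (\<lambda>n. f n \<le> M) sequentially} < lsup f + \<delta>"
    using assms(2) by (simp add: lsup_def)
  then obtain M where "eventually (\<lambda>n. f n \<le> M) sequentially" "M < lsup f + \<delta>"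
    using cInf_lessD[OF ne] by blast
  then show ?thesis by (auto elim: eventually_mono)
qed

lemma lsup_ge0:
  assumes "bnd f" shows "0 \<le> lsup f"
proof -
  obtain K where K: "\<And>n. f n \<le> K" using assms(1) bnd_def by blast
  have ne: "{M. eventually (\<lambda>n. f n \<le> M) sequentially} \<noteq> {}"
    using K by (auto intro!: exI[of _ K])
  show ?thesis unfolding lsup_def
  proof (rule cInf_greatest[OF ne])
    fix M assume "M \<in> {M. eventually (\<lambda>n. f n \<le> M) sequentially}"
    then obtain N where "\<forall>n\<ge>N. f n \<le> M" by (auto simp: eventually_sequentially)
    then have "f N \<le> M" by simp
    moreover have "0 \<le> f N" using assms unfolding bnd_def by blast
    ultimately show "0 \<le> M" by linarith
  qed
qed

lemma lsup_comb:
  assumes f0: "\<And>n. 0 \<le> f n" and g: "bnd g" and h: "bnd h" and a: "a \<ge> 0" and b: "b \<ge> 0"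
    and ev: "eventually (\<lambda>n. f n \<le> a * g n + b * h n + c) sequentially"
  shows "lsup f \<le> a * lsup g + b * lsup h + c"
proof (rule lsup_le_eps[OF f0])
  fix \<delta> :: real assume d: "\<delta> > 0"
  define d' where "d' = \<delta> / (a + b + 1)"
  have d'0: "d' > 0" using d a b by (simp add: d'_def)
  have ad: "(a + b) * d' \<le> \<delta>"
  proof -
    have "(a + b) * d' \<le> (a + b + 1) * d'" using d'0 by simp
    also have "\<dots> = \<delta>" using a b by (simp add: d'_def)
    finally show ?thesis .
  qed
  have "eventually (\<lambda>n. g n \<le> lsup g + d') sequentially" using lsup_ev[OF g d'0] .
  moreover have "eventually (\<lambda>n. h n \<le> lsup h + d') sequentially" using lsup_ev[OF h d'0] .
  ultimately show "eventually (\<lambda>n. f n \<le> a * lsup g + b * lsup h + c + \<delta>) sequentially"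
    using ev
  proof (eventually_elim)
    case (elim n)
    have "a * g n \<le> a * (lsup g + d')" using elim a by (intro mult_left_mono) auto
    moreover have "b * h n \<le> b * (lsup h + d')" using elim b by (intro mult_left_mono) auto
    ultimately show ?case using elim ad by (simp add: algebra_simps)
  qed
qed

lemma lsup_mono:
  assumes f0: "\<And>n. 0 \<le> f n" and g: "bnd g" and ev: "eventually (\<lambda>n. f n \<le> g n + c) sequentially"
  shows "lsup f \<le> lsup g + c"
  using lsup_comb[OF f0 g g, where a=1 and b=0 and c=c] ev by simp

lemma lsup_lim:
  assumes f: "bnd f" and lim: "f \<longlonglongrightarrow> l"
  shows "lsup f = l"
proof (rule antisym)
  show "lsup f \<le> l"
  proof (rule lsup_le_eps)
    show "0 \<le> f n" for n using f bnd_def by blast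
    fix \<delta> :: real assume "\<delta> > 0"
    then have "eventually (\<lambda>n. dist (f n) l < \<delta>) sequentially" using lim tendsto_iff by blast
    then show "eventually (\<lambda>n. f n \<le> l + \<delta>) sequentially"
      by eventually_elim (auto simp: dist_real_def)
  qed
  show "l \<le> lsup f"
  proof (rule field_le_epsilon)
    fix \<delta> :: real assume d: "\<delta> > 0"
    then have "eventually (\<lambda>n. dist (f n) l < \<delta>/2) sequentially" using lim by (metis half_gt_zero tendsto_iff)
    moreover have "eventually (\<lambda>n. f n \<le> lsup f + \<delta>/2) sequentially" using lsup_ev[OF f] d by simp
    ultimately have "eventually (\<lambda>n. l \<le> lsup f + \<delta>) sequentially"
    proof eventually_elim
      case (elim n)
      then have "\<bar>f n - l\<bar> < \<delta>/2" by (simp add: dist_real_def)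
      then have "l - f n < \<delta>/2" by linarith
      then show ?case using elim by linarith
    qed
    then show "l \<le> lsup f + \<delta>" by (simp add: eventually_const_iff)
  qed
qed

lemma cauchy_from_bound:
  fixes X :: "nat \<Rightarrow> 'a::real_normed_vector"
  assumes c: "c \<ge> 0" and bd: "\<And>j k. (norm (X j - X k))\<^sup>2 \<le> c * (1 / (real j + 1) + 1 / (real k + 1))"
  shows "Cauchy X"
  unfolding Cauchy_def
proof (intro allI impI)
  fix e :: real assume e: "e > 0"
  obtain N :: nat where N: "2 * (c + 1) / e\<^sup>2 < real N" using reals_Archimedean2 by blast
  have Npos: "N > 0" using N e c by (cases N) (auto simp: field_simps)
  show "\<exists>M. \<forall>j\<ge>M. \<forall>k\<ge>M. dist (X j) (X k) < e"
  proof (intro exI allI impI)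
    fix j k assume "N \<le> j" "N \<le> k"
    have "1 / (real j + 1) \<le> 1 / real N" using \<open>N \<le> j\<close> Npos by (intro divide_left_mono) auto
    moreover have "1 / (real k + 1) \<le> 1 / real N" using \<open>N \<le> k\<close> Npos by (intro divide_left_mono) auto
    ultimately have "c * (1 / (real j + 1) + 1 / (real k + 1)) \<le> c * (2 / real N)"
      using c by (intro mult_left_mono) auto
    also have "\<dots> \<le> (c + 1) * (2 / real N)" using Npos by (intro mult_right_mono) auto
    also have "\<dots> < e\<^sup>2"
    proof -
      have "2 * (c + 1) < e\<^sup>2 * real N" using N e by (simp add: field_simps)
      then show ?thesis using Npos by (simp add: field_simps)
    qed
    finally have "(norm (X j - X k))\<^sup>2 < e\<^sup>2" using bd[of j k] by linarith
    then show "dist (X j) (X k) < e" using e by (simp add: dist_norm power_less_imp_less_base)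
  qed
qed


lemma sq_le_sum_sq:
  fixes A B C :: real
  assumes "0 \<le> A" "A \<le> C + B" "0 \<le> B"
  shows "A\<^sup>2 \<le> C\<^sup>2 + 2 * B * C + B\<^sup>2 \<or> C < 0"
proof (cases "C < 0")
  case False
  then have "A\<^sup>2 \<le> (C + B)\<^sup>2" using assms by (intro power_mono) auto
  then show ?thesis by (simp add: power2_sum algebra_simps)
qed simp

lemma asym_center:
  fixes w :: "nat \<Rightarrow> 'a::{real_inner,complete_space}" and T :: "'a \<Rightarrow> 'a"
  assumes K: "\<And>k. norm (w k) \<le> K"
    and ne: "\<And>p q. norm (T p - T q) \<le> norm (p - q)"
    and ar: "(\<lambda>k. norm (w k - T (w k))) \<longlonglongrightarrow> 0"
  shows "\<exists>c. T c = c \<and> (\<forall>p. lsup (\<lambda>k. (norm (w k - c))\<^sup>2) \<le> lsup (\<lambda>k. (norm (w k - p))\<^sup>2))"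
proof -
  define \<Phi> where "\<Phi> p = lsup (\<lambda>k. (norm (w k - p))\<^sup>2)" for p
  have wp: "norm (w k - p) \<le> K + norm p" for k p
    using norm_triangle_ineq4[of "w k" p] K[of k] by linarith
  have bndp: "bnd (\<lambda>k. (norm (w k - p))\<^sup>2)" for p
    unfolding bnd_def
  proof (intro conjI allI exI)
    show "(norm (w k - p))\<^sup>2 \<le> (K + norm p)\<^sup>2" for k using wp by (intro power_mono) auto
  qed simp
  have Phi0: "0 \<le> \<Phi> p" for p unfolding \<Phi>_def using bndp by (rule lsup_ge0)
  have conv: "\<Phi> ((1/2) *\<^sub>R (p + q)) \<le> (1/2) * \<Phi> p + (1/2) * \<Phi> q + - ((norm (p - q))\<^sup>2 / 4)" for p q
    unfolding \<Phi>_def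
  proof (rule lsup_comb[OF _ bndp bndp])
    show "eventually (\<lambda>k. (norm (w k - (1/2) *\<^sub>R (p + q)))\<^sup>2 \<le> 1/2 * (norm (w k - p))\<^sup>2 + 1/2 * (norm (w k - q))\<^sup>2 + - ((norm (p - q))\<^sup>2 / 4)) sequentially"
    proof (rule always_eventually, rule allI)
      fix k
      have "(norm ((1 - 1/2) *\<^sub>R (w k - p) + (1/2) *\<^sub>R (w k - q)))\<^sup>2
          = (1 - 1/2) * (norm (w k - p))\<^sup>2 + 1/2 * (norm (w k - q))\<^sup>2 - 1/2 * (1 - 1/2) * (norm ((w k - p) - (w k - q)))\<^sup>2"
        by (rule norm_mid_sq)
      moreover have "(1 - 1/2) *\<^sub>R (w k - p) + (1/2) *\<^sub>R (w k - q) = w k - (1/2) *\<^sub>R (p + q)"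
        by (simp add: algebra_simps scaleR_add_left[symmetric])
      moreover have "norm ((w k - p) - (w k - q)) = norm (p - q)"
        by (simp add: norm_minus_commute)
      ultimately show "(norm (w k - (1/2) *\<^sub>R (p + q)))\<^sup>2 \<le> 1/2 * (norm (w k - p))\<^sup>2 + 1/2 * (norm (w k - q))\<^sup>2 + - ((norm (p - q))\<^sup>2 / 4)"
        by simp
    qed
  qed simp_all
  have cont: "\<Phi> p \<le> \<Phi> q + (2 * norm (p - q) * (K + norm q) + (norm (p - q))\<^sup>2)" for p q
    unfolding \<Phi>_def
  proof (rule lsup_mono[OF _ bndp])
    show "eventually (\<lambda>k. (norm (w k - p))\<^sup>2 \<le> (norm (w k - q))\<^sup>2 + (2 * norm (p - q) * (K + norm q) + (norm (p - q))\<^sup>2)) sequentially"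
    proof (rule always_eventually, rule allI)
      fix k
      have t: "norm (w k - p) \<le> norm (w k - q) + norm (p - q)"
        using norm_triangle_ineq[of "w k - q" "q - p"] by (simp add: norm_minus_commute)
      have "(norm (w k - p))\<^sup>2 \<le> (norm (w k - q) + norm (p - q))\<^sup>2" using t by (intro power_mono) auto
      also have "\<dots> = (norm (w k - q))\<^sup>2 + 2 * norm (p - q) * norm (w k - q) + (norm (p - q))\<^sup>2"
        by (simp add: power2_sum algebra_simps)
      also have "2 * norm (p - q) * norm (w k - q) \<le> 2 * norm (p - q) * (K + norm q)"
        using wp by (intro mult_left_mono) auto
      finally show "(norm (w k - p))\<^sup>2 \<le> (norm (w k - q))\<^sup>2 + (2 * norm (p - q) * (K + norm q) + (norm (p - q))\<^sup>2)"
        by simp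
    qed
  qed simp
  define m where "m = Inf (range \<Phi>)"
  have bddP: "bdd_below (range \<Phi>)" using Phi0 by (auto intro!: bdd_belowI)
  have mle: "m \<le> \<Phi> p" for p unfolding m_def using bddP by (rule cInf_lower[rotated]) simp
  have "\<forall>j::nat. \<exists>p. \<Phi> p < m + 1 / (real j + 1)"
  proof
    fix j :: nat
    have "Inf (range \<Phi>) < m + 1 / (real j + 1)" unfolding m_def by simp
    then obtain v where "v \<in> range \<Phi>" "v < m + 1 / (real j + 1)" using cInf_lessD[of "range \<Phi>"] by blast
    then show "\<exists>p. \<Phi> p < m + 1 / (real j + 1)" by blast
  qed
  then obtain P where P: "\<And>j. \<Phi> (P j) < m + 1 / (real j + 1)" by metis
  have "Cauchy P"
  proof (rule cauchy_from_bound[of 2])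
    fix j k
    have "m \<le> \<Phi> ((1/2) *\<^sub>R (P j + P k))" by (rule mle)
    also have "\<dots> \<le> (1/2) * \<Phi> (P j) + (1/2) * \<Phi> (P k) + - ((norm (P j - P k))\<^sup>2 / 4)" by (rule conv)
    finally have "m \<le> (1/2) * \<Phi> (P j) + (1/2) * \<Phi> (P k) + - ((norm (P j - P k))\<^sup>2 / 4)" .
    then show "(norm (P j - P k))\<^sup>2 \<le> 2 * (1 / (real j + 1) + 1 / (real k + 1))"
      using P[of j] P[of k] by argo
  qed simp
  then obtain c where c: "P \<longlonglongrightarrow> c" using convergent_eq_Cauchy by blast
  have PhiP: "(\<lambda>j. \<Phi> (P j)) \<longlonglongrightarrow> m"
  proof -
    have u: "(\<lambda>n. m + 1 / (real n + 1)) \<longlonglongrightarrow> m"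
      using LIMSEQ_inverse_real_of_nat_add[of m] by (simp add: inverse_eq_divide add.commute)
    show ?thesis
      by (rule tendsto_sandwich[OF _ _ tendsto_const u])
        (use P mle in \<open>auto intro!: always_eventually dest: less_imp_le\<close>)
  qed
  have Phic: "\<Phi> c \<le> m"
  proof -
    have "(\<lambda>j. \<Phi> (P j) + (2 * norm (c - P j) * (K + norm (P j)) + (norm (c - P j))\<^sup>2))
        \<longlonglongrightarrow> m + (2 * norm (c - c) * (K + norm c) + (norm (c - c))\<^sup>2)"
      by (intro tendsto_intros PhiP c)
    then have l: "(\<lambda>j. \<Phi> (P j) + (2 * norm (c - P j) * (K + norm (P j)) + (norm (c - P j))\<^sup>2)) \<longlonglongrightarrow> m"
      by simp
    show ?thesis
      by (rule LIMSEQ_le[OF tendsto_const l]) (use cont in auto)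
  qed
  have min: "\<Phi> c \<le> \<Phi> p" for p using Phic mle[of p] by linarith
  have PhiTc: "\<Phi> (T c) \<le> \<Phi> c"
    unfolding \<Phi>_def
  proof (rule lsup_le_eps)
    fix \<delta> :: real assume d: "\<delta> > 0"
    define dk where "dk k = norm (w k - T (w k))" for k
    have "(\<lambda>k. 2 * dk k * (K + norm c) + (dk k)\<^sup>2) \<longlonglongrightarrow> 2 * 0 * (K + norm c) + 0\<^sup>2"
      unfolding dk_def by (intro tendsto_intros ar)
    then have "(\<lambda>k. 2 * dk k * (K + norm c) + (dk k)\<^sup>2) \<longlonglongrightarrow> 0" by simp
    then have "eventually (\<lambda>k. dist (2 * dk k * (K + norm c) + (dk k)\<^sup>2) 0 < \<delta>/2) sequentially"
      by (rule tendsto_iff[THEN iffD1, rule_format]) (use d in simp)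
    then have e1: "eventually (\<lambda>k. 2 * dk k * (K + norm c) + (dk k)\<^sup>2 < \<delta>/2) sequentially"
    proof (rule eventually_mono)
      fix k assume h: "dist (2 * dk k * (K + norm c) + (dk k)\<^sup>2) 0 < \<delta>/2"
      have "2 * dk k * (K + norm c) + (dk k)\<^sup>2 \<le> dist (2 * dk k * (K + norm c) + (dk k)\<^sup>2) 0"
        unfolding dist_real_def by simp
      then show "2 * dk k * (K + norm c) + (dk k)\<^sup>2 < \<delta>/2" using h by linarith
    qed
    have e2: "eventually (\<lambda>k. (norm (w k - c))\<^sup>2 \<le> \<Phi> c + \<delta>/2) sequentially"
      unfolding \<Phi>_def using lsup_ev[OF bndp] d by simp
    show "eventually (\<lambda>k. (norm (w k - T c))\<^sup>2 \<le> lsup (\<lambda>k. (norm (w k - c))\<^sup>2) + \<delta>) sequentially"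
      using e1 e2
    proof eventually_elim
      case (elim k)
      have t: "norm (w k - T c) \<le> norm (w k - c) + dk k"
      proof -
        have "norm (w k - T c) \<le> norm (w k - T (w k)) + norm (T (w k) - T c)"
          using norm_triangle_ineq[of "w k - T (w k)" "T (w k) - T c"] by simp
        then show ?thesis using ne[of "w k" c] by (simp add: dk_def)
      qed
      have dk0: "dk k \<ge> 0" by (simp add: dk_def)
      have "(norm (w k - T c))\<^sup>2 \<le> (norm (w k - c) + dk k)\<^sup>2" using t by (intro power_mono) auto
      also have "\<dots> = (norm (w k - c))\<^sup>2 + 2 * dk k * norm (w k - c) + (dk k)\<^sup>2"
        by (simp add: power2_sum algebra_simps)
      also have "2 * dk k * norm (w k - c) \<le> 2 * dk k * (K + norm c)"
        using wp dk0 by (intro mult_left_mono) auto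
      finally show ?case using elim unfolding \<Phi>_def by linarith
    qed
  qed simp
  have "T c = c"
  proof -
    have "m \<le> \<Phi> ((1/2) *\<^sub>R (c + T c))" by (rule mle)
    also have "\<dots> \<le> (1/2) * \<Phi> c + (1/2) * \<Phi> (T c) + - ((norm (c - T c))\<^sup>2 / 4)" by (rule conv)
    finally have "(norm (c - T c))\<^sup>2 \<le> 0" using PhiTc Phic by argo
    then show ?thesis by simp
  qed
  then show ?thesis using min unfolding \<Phi>_def by blast
qed


lemma bnd_sq:
  fixes w :: "nat \<Rightarrow> 'a::real_normed_vector"
  assumes "\<And>k. norm (w k) \<le> K"
  shows "bnd (\<lambda>k. (norm (w k - p))\<^sup>2)"
  unfolding bnd_def
proof (intro conjI allI exI)
  fix k
  have "norm (w k - p) \<le> K + norm p" using norm_triangle_ineq4[of "w k" p] assms[of k] by linarith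
  then show "(norm (w k - p))\<^sup>2 \<le> (K + norm p)\<^sup>2" by (intro power_mono) auto
qed simp

lemma weak_from_center:
  fixes x :: "nat \<Rightarrow> 'a::{real_inner,complete_space}" and T :: "'a \<Rightarrow> 'a"
  assumes K: "\<And>n. norm (x n) \<le> K"
    and ne: "\<And>p q. norm (T p - T q) \<le> norm (p - q)"
    and ar: "(\<lambda>n. norm (x n - T (x n))) \<longlonglongrightarrow> 0"
    and fej: "\<And>z. T z = z \<Longrightarrow> convergent (\<lambda>n. norm (x n - z))"
  shows "\<exists>c. T c = c \<and> weak_conv x c"
proof -
  obtain c where Tc: "T c = c" and cmin: "\<And>p. lsup (\<lambda>k. (norm (x k - c))\<^sup>2) \<le> lsup (\<lambda>k. (norm (x k - p))\<^sup>2)"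
    using asym_center[OF K ne ar] by blast
  have "weak_conv x c"
    unfolding weak_conv_def
  proof
    fix y
    define s where "s n = inner (x n - c) y" for n
    have "s \<longlonglongrightarrow> 0"
    proof (rule ccontr)
      assume ns: "\<not> s \<longlonglongrightarrow> 0"
      then obtain \<delta> where d: "\<delta> > 0" and freq: "\<And>N. \<exists>n\<ge>N. \<delta> \<le> \<bar>s n\<bar>"
        unfolding LIMSEQ_iff by (auto simp: not_less)
      have "infinite {n. \<delta> \<le> \<bar>s n\<bar>}"
        using freq by (simp add: infinite_nat_iff_unbounded_le)
      then obtain r1 :: "nat \<Rightarrow> nat" where r1: "strict_mono r1" "\<And>n. r1 n \<in> {n. \<delta> \<le> \<bar>s n\<bar>}"
        using infinite_enumerate by blast
      have sb: "\<bar>s n\<bar> \<le> (K + norm c) * norm y" for n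
      proof -
        have "\<bar>s n\<bar> \<le> norm (x n - c) * norm y" unfolding s_def by (rule Cauchy_Schwarz_ineq2)
        also have "\<dots> \<le> (K + norm c) * norm y"
          using norm_triangle_ineq4[of "x n" c] K[of n] by (intro mult_right_mono) auto
        finally show ?thesis .
      qed
      have "bounded (range (s \<circ> r1))"
        unfolding bounded_iff using sb by auto
      then obtain \<delta>' r2 where r2: "strict_mono r2" "((s \<circ> r1) \<circ> r2) \<longlonglongrightarrow> \<delta>'"
        using bounded_imp_convergent_subsequence by blast
      define \<rho> where "\<rho> = r1 \<circ> r2"
      have rho: "strict_mono \<rho>" unfolding \<rho>_def using r1 r2 by (simp add: strict_mono_o)
      have srho: "(\<lambda>k. s (\<rho> k)) \<longlonglongrightarrow> \<delta>'" using r2 by (simp add: \<rho>_def o_def)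
      have "\<delta> \<le> \<bar>\<delta>'\<bar>"
      proof (rule LIMSEQ_le_const[OF tendsto_rabs[OF srho]])
        show "\<exists>N. \<forall>n\<ge>N. \<delta> \<le> \<bar>s (\<rho> n)\<bar>" using r1(2) by (auto simp: \<rho>_def)
      qed
      then have d'0: "\<delta>' \<noteq> 0" using d by auto
      define w where "w = x \<circ> \<rho>"
      have Kw: "\<And>k. norm (w k) \<le> K" using K by (simp add: w_def)
      have arw: "(\<lambda>k. norm (w k - T (w k))) \<longlonglongrightarrow> 0"
        using LIMSEQ_subseq_LIMSEQ[OF ar rho] by (simp add: w_def o_def)
      obtain c' where Tc': "T c' = c'" and c'min: "\<And>p. lsup (\<lambda>k. (norm (w k - c'))\<^sup>2) \<le> lsup (\<lambda>k. (norm (w k - p))\<^sup>2)"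
        using asym_center[OF Kw ne arw] by blast
      obtain Lc where Lc: "(\<lambda>n. norm (x n - c)) \<longlonglongrightarrow> Lc" using fej[OF Tc] convergent_def by blast
      obtain Lc' where Lc': "(\<lambda>n. norm (x n - c')) \<longlonglongrightarrow> Lc'" using fej[OF Tc'] convergent_def by blast
      have Lc2: "(\<lambda>n. (norm (x n - c))\<^sup>2) \<longlonglongrightarrow> Lc\<^sup>2" using Lc by (intro tendsto_intros)
      have Lc'2: "(\<lambda>n. (norm (x n - c'))\<^sup>2) \<longlonglongrightarrow> Lc'\<^sup>2" using Lc' by (intro tendsto_intros)
      have wLc2: "(\<lambda>k. (norm (w k - c))\<^sup>2) \<longlonglongrightarrow> Lc\<^sup>2"
        using LIMSEQ_subseq_LIMSEQ[OF Lc2 rho] by (simp add: w_def o_def)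
      have wLc'2: "(\<lambda>k. (norm (w k - c'))\<^sup>2) \<longlonglongrightarrow> Lc'\<^sup>2"
        using LIMSEQ_subseq_LIMSEQ[OF Lc'2 rho] by (simp add: w_def o_def)
      have "Lc\<^sup>2 \<le> Lc'\<^sup>2"
        using cmin[of c'] lsup_lim[OF bnd_sq[OF K] Lc2] lsup_lim[OF bnd_sq[OF K] Lc'2] by simp
      have y0: "y \<noteq> 0"
      proof
        assume "y = 0"
        then have "\<And>k. s (\<rho> k) = 0" by (simp add: s_def)
        then have "(\<lambda>k. s (\<rho> k)) \<longlonglongrightarrow> 0" by simp
        with srho have "\<delta>' = 0" using LIMSEQ_unique by blast
        with d'0 show False by simp
      qed
      then have ny: "(norm y)\<^sup>2 > 0" by simp
      define t where "t = \<delta>' / (norm y)\<^sup>2"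
      have expand: "(norm (w k - (c + t *\<^sub>R y)))\<^sup>2 = (norm (w k - c))\<^sup>2 - 2 * t * s (\<rho> k) + t\<^sup>2 * (norm y)\<^sup>2" for k
      proof -
        have "w k - (c + t *\<^sub>R y) = (w k - c) - t *\<^sub>R y" by (simp add: algebra_simps)
        then show ?thesis
          by (simp add: s_def w_def power2_norm_eq_inner inner_diff_left inner_diff_right inner_commute)
            (simp add: algebra_simps power2_eq_square inner_commute)
      qed
      have "(\<lambda>k. (norm (w k - (c + t *\<^sub>R y)))\<^sup>2) \<longlonglongrightarrow> Lc\<^sup>2 - 2 * t * \<delta>' + t\<^sup>2 * (norm y)\<^sup>2"
        unfolding expand by (intro tendsto_intros wLc2 srho)
      moreover have "Lc\<^sup>2 - 2 * t * \<delta>' + t\<^sup>2 * (norm y)\<^sup>2 = Lc\<^sup>2 - \<delta>'\<^sup>2 / (norm y)\<^sup>2"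
        using ny by (simp add: t_def field_simps power2_eq_square)
      ultimately have lp: "(\<lambda>k. (norm (w k - (c + t *\<^sub>R y)))\<^sup>2) \<longlonglongrightarrow> Lc\<^sup>2 - \<delta>'\<^sup>2 / (norm y)\<^sup>2" by simp
      have "Lc'\<^sup>2 \<le> Lc\<^sup>2 - \<delta>'\<^sup>2 / (norm y)\<^sup>2"
        using c'min[of "c + t *\<^sub>R y"] lsup_lim[OF bnd_sq[OF Kw] wLc'2] lsup_lim[OF bnd_sq[OF Kw] lp] by simp
      moreover have "\<delta>'\<^sup>2 / (norm y)\<^sup>2 > 0" using d'0 ny by simp
      ultimately show False using \<open>Lc\<^sup>2 \<le> Lc'\<^sup>2\<close> by linarith
    qed
    then have "(\<lambda>n. s n + inner c y) \<longlonglongrightarrow> 0 + inner c y" by (intro tendsto_intros)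
    then show "(\<lambda>n. inner (x n) y) \<longlonglongrightarrow> inner c y" by (simp add: s_def inner_diff_left)
  qed
  with Tc show ?thesis by blast
qed


lemma qf_bound:
  fixes a e :: "nat \<Rightarrow> real"
  assumes step: "\<And>n. a (Suc n) \<le> a n + e n" and se: "summable e" and e0: "\<And>n. 0 \<le> e n"
  shows "a n \<le> a 0 + suminf e"
proof -
  have "a n \<le> a 0 + (\<Sum>k<n. e k)"
  proof (induction n)
    case (Suc n) then show ?case using step[of n] by simp
  qed simp
  moreover have "(\<Sum>k<n. e k) \<le> suminf e" using se e0 by (intro sum_le_suminf) auto
  ultimately show ?thesis by linarith
qed

lemma qf_conv:
  fixes a e :: "nat \<Rightarrow> real"
  assumes a0: "\<And>n. 0 \<le> a n" and step: "\<And>n. a (Suc n) \<le> a n + e n" and se: "summable e" and e0: "\<And>n. 0 \<le> e n"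
  shows "convergent a"
proof -
  define b where "b n = a n - (\<Sum>k<n. e k)" for n
  have "decseq b" unfolding decseq_Suc_iff b_def using step by (simp add: algebra_simps)
  moreover have "\<forall>i. - suminf e \<le> b i"
  proof
    fix i
    have "(\<Sum>k<i. e k) \<le> suminf e" using se e0 by (intro sum_le_suminf) auto
    then show "- suminf e \<le> b i" using a0[of i] by (simp add: b_def)
  qed
  ultimately obtain L where L: "b \<longlonglongrightarrow> L" using decseq_convergent by blast
  have "(\<lambda>n. b n + (\<Sum>k<n. e k)) \<longlonglongrightarrow> L + suminf e" using L summable_LIMSEQ[OF se] by (rule tendsto_add)
  then have "a \<longlonglongrightarrow> L + suminf e" by (simp add: b_def)
  then show ?thesis by (auto simp: convergent_def)
qed

lemma summable_telescope_bound:
  fixes a e f :: "nat \<Rightarrow> real"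
  assumes f0: "\<And>n. 0 \<le> f n" and a0: "\<And>n. 0 \<le> a n" and step: "\<And>n. f n \<le> a n - a (Suc n) + e n"
    and se: "summable e" and e0: "\<And>n. 0 \<le> e n"
  shows "summable f"
proof (rule summableI_nonneg_bounded[where x = "a 0 + suminf e"])
  fix n
  have "(\<Sum>k<n. f k) \<le> (\<Sum>k<n. a k - a (Suc k) + e k)" using step by (intro sum_mono) auto
  also have "\<dots> = a 0 - a n + (\<Sum>k<n. e k)" by (simp add: sum.distrib sum_lessThan_telescope')
  also have "(\<Sum>k<n. e k) \<le> suminf e" using se e0 by (intro sum_le_suminf) auto
  finally show "(\<Sum>k<n. f k) \<le> a 0 + suminf e" using a0[of n] by linarith
qed (use f0 in auto)

lemma summable_sq:
  fixes e :: "nat \<Rightarrow> real"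
  assumes se: "summable e" and e0: "\<And>n. 0 \<le> e n"
  shows "summable (\<lambda>n. (e n)\<^sup>2)"
proof (rule summable_comparison_test'[where g = "\<lambda>n. suminf e * e n" and N = 0])
  show "summable (\<lambda>n. suminf e * e n)" using se by (rule summable_mult)
  fix n
  have "e n \<le> suminf e" using sum_le_suminf[OF se, of "{n}"] e0 by auto
  then have "e n * e n \<le> suminf e * e n" using e0 by (intro mult_right_mono) auto
  then show "norm ((e n)\<^sup>2) \<le> suminf e * e n" by (simp add: power2_eq_square)
qed

lemma summable_sq_tendsto:
  fixes r :: "nat \<Rightarrow> 'a::real_normed_vector"
  assumes "summable (\<lambda>n. (norm (r n))\<^sup>2)"
  shows "r \<longlonglongrightarrow> 0"
proof -
  have "(\<lambda>n. (norm (r n))\<^sup>2) \<longlonglongrightarrow> 0" using assms summable_LIMSEQ_zero by blast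
  then have "(\<lambda>n. sqrt ((norm (r n))\<^sup>2)) \<longlonglongrightarrow> sqrt 0" by (intro tendsto_intros)
  then have "(\<lambda>n. norm (r n)) \<longlonglongrightarrow> 0" by simp
  then show ?thesis using tendsto_norm_zero_iff by blast
qed


theorem proposition4p4:
  fixes A :: "'a::{real_inner, complete_space} \<Rightarrow> 'a set"
    and B :: "'a \<Rightarrow> 'a"
    and \<beta> \<epsilon> :: real
    and x0 :: 'a
    and \<gamma> lam :: "nat \<Rightarrow> real"
    and a b x :: "nat \<Rightarrow> 'a"
  assumes beta_pos: "0 < \<beta>"
    and eps: "0 < \<epsilon>" "\<epsilon> < min (1/2) \<beta>"
    and A_mm: "maximally_monotone A"
    and B_coco: "cocoercive \<beta> B"
    and gamma: "\<And>n. \<epsilon> \<le> \<gamma> n \<and> \<gamma> n \<le> 2 * \<beta> / (1 + \<epsilon>)"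
    and a_sum: "summable (\<lambda>n. norm (a n))"
    and b_sum: "summable (\<lambda>n. norm (b n))"
    and zer_ne: "zer (op_plus A B) \<noteq> {}"
    and lambda: "\<And>n. \<epsilon> \<le> lam n \<and> lam n \<le> (1 - \<epsilon>) * (2 + \<epsilon> - \<gamma> n / (2 * \<beta>))"
    and x0: "x 0 = x0"
    and x_rec: "\<And>n. x (Suc n) = x n + lam n *\<^sub>R
        (resolvent (op_scale (\<gamma> n) A) (x n - \<gamma> n *\<^sub>R (B (x n) + b n)) + a n - x n)"
  shows "summable (\<lambda>n. (norm (resolvent (op_scale (\<gamma> n) A) (x n - \<gamma> n *\<^sub>R B (x n)) - x n))\<^sup>2)
    \<and> (\<forall>z \<in> zer (op_plus A B). summable (\<lambda>n. (norm (B (x n) - B z))\<^sup>2))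
    \<and> (\<exists>z \<in> zer (op_plus A B). weak_conv x z)
    \<and> (((\<forall>z \<in> zer (op_plus A B). demiregular_at A z)
         \<or> (\<forall>z \<in> zer (op_plus A B). demiregular_at (\<lambda>y. {B y}) z)
         \<or> interior (zer (op_plus A B)) \<noteq> {})
        \<longrightarrow> (\<exists>z \<in> zer (op_plus A B). x \<longlonglongrightarrow> z))"
proof -
  have monoA: "monotone_op A" using A_mm maximally_monotone_def by blast
  define J where "J g p = resolvent (op_scale g A) p" for g p
  define Z where "Z = zer (op_plus A B)"
  have Zchar: "z \<in> Z \<longleftrightarrow> - B z \<in> A z" for z
  proof
    assume "z \<in> Z"
    then obtain u where "u \<in> A z" "0 = u + B z" by (auto simp: Z_def zer_def op_plus_def)
    then have "u = - B z" by (simp add: eq_neg_iff_add_eq_0)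
    with \<open>u \<in> A z\<close> show "- B z \<in> A z" by simp
  next
    assume "- B z \<in> A z"
    then have "0 \<in> (\<lambda>u. u + B z) ` A z" by (force simp: image_iff)
    then show "z \<in> Z" by (simp add: Z_def zer_def op_plus_def)
  qed
  have eps1: "\<epsilon> \<le> 1" "\<epsilon> < \<beta>" "\<epsilon> < 1/2" using eps by auto
  have g2b: "2 * \<beta> / (1 + \<epsilon>) \<le> 2 * \<beta>" using beta_pos eps by (simp add: divide_le_eq)
  have gge: "\<epsilon> \<le> \<gamma> n" and gle: "\<gamma> n \<le> 2 * \<beta>" and gpos: "0 < \<gamma> n" for n
    using gamma[of n] g2b eps by auto
  have lge: "\<epsilon> \<le> lam n" and lle: "lam n \<le> (1 - \<epsilon>) * (2 + \<epsilon> - \<gamma> n / (2 * \<beta>))" for n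
    using lambda[of n] by auto
  have lle3: "lam n \<le> 3" for n
  proof -
    have t0: "0 \<le> \<gamma> n / (2 * \<beta>)" using gpos[of n] beta_pos by simp
    have "(1 - \<epsilon>) * (2 + \<epsilon> - \<gamma> n / (2 * \<beta>)) \<le> 1 * (2 + \<epsilon> - \<gamma> n / (2 * \<beta>))"
    proof (rule mult_right_mono)
      have "\<gamma> n / (2 * \<beta>) \<le> 1" using gle[of n] beta_pos by simp
      then show "0 \<le> 2 + \<epsilon> - \<gamma> n / (2 * \<beta>)" using eps by linarith
    qed (use eps in auto)
    then show ?thesis using lle[of n] t0 eps1 by argo
  qed
  have lpos: "0 < lam n" for n using lge[of n] eps by linarith
  have fixJ: "J g (z - g *\<^sub>R B z) = z" if "z \<in> Z" "g > 0" for z g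
    unfolding J_def res_char[OF A_mm \<open>g > 0\<close>]
    using that Zchar by (intro bexI[of _ "- B z"]) (auto simp: algebra_simps)
  have coco: "\<beta> * (norm (B p - B q))\<^sup>2 \<le> inner (p - q) (B p - B q)" for p q
    using B_coco unfolding cocoercive_def by blast
  define r where "r n = J (\<gamma> n) (x n - \<gamma> n *\<^sub>R B (x n)) - x n" for n
  define e where "e n = lam n * (\<gamma> n * norm (b n) + norm (a n))" for n
  have e0: "0 \<le> e n" for n using lpos[of n] gpos[of n] by (simp add: e_def)
  have se: "summable e"
  proof (rule summable_comparison_test'[where N = 0])
    show "summable (\<lambda>n. 6 * \<beta> * norm (b n) + 3 * norm (a n))"
      using a_sum b_sum by (intro summable_add summable_mult)
    fix n
    have "\<gamma> n * norm (b n) \<le> 2 * \<beta> * norm (b n)" using gle[of n] by (intro mult_right_mono) auto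
    then have "e n \<le> 3 * (2 * \<beta> * norm (b n) + norm (a n))"
      unfolding e_def using lle3[of n] lpos[of n] gpos[of n]
      by (intro mult_mono) auto
    then show "norm (e n) \<le> 6 * \<beta> * norm (b n) + 3 * norm (a n)" using e0[of n] by simp
  qed
  define E where "E = suminf e"
  define R where "R n = x n + lam n *\<^sub>R r n" for n
  have errR: "norm (x (Suc n) - R n) \<le> e n" for n
  proof -
    define J1 where "J1 = J (\<gamma> n) (x n - \<gamma> n *\<^sub>R (B (x n) + b n))"
    define J0 where "J0 = J (\<gamma> n) (x n - \<gamma> n *\<^sub>R B (x n))"
    have "x (Suc n) - R n = lam n *\<^sub>R ((J1 - J0) + a n)"
      unfolding x_rec R_def r_def J1_def J0_def J_def by (simp add: algebra_simps)
    then have "norm (x (Suc n) - R n) = lam n * norm ((J1 - J0) + a n)" using lpos[of n] by simp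
    also have "\<dots> \<le> lam n * (norm (J1 - J0) + norm (a n))"
      using lpos[of n] by (intro mult_left_mono norm_triangle_ineq) auto
    also have "norm (J1 - J0) \<le> \<gamma> n * norm (b n)"
    proof -
      have "norm (J1 - J0) \<le> norm ((x n - \<gamma> n *\<^sub>R (B (x n) + b n)) - (x n - \<gamma> n *\<^sub>R B (x n)))"
        unfolding J1_def J0_def J_def by (rule res_nonexp[OF A_mm gpos])
      also have "\<dots> = \<gamma> n * norm (b n)" using gpos[of n] by (simp add: algebra_simps)
      finally show ?thesis .
    qed
    then have "lam n * (norm (J1 - J0) + norm (a n)) \<le> lam n * (\<gamma> n * norm (b n) + norm (a n))"
      using lpos[of n] by (intro mult_left_mono) auto
    finally show ?thesis by (simp add: e_def)
  qed
  define c1 where "c1 = \<epsilon> ^ 3 / 2"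
  define c2 where "c2 = \<beta> * \<epsilon> ^ 4 / 2"
  have c1pos: "c1 > 0" and c2pos: "c2 > 0" using eps beta_pos by (simp_all add: c1_def c2_def)
  have stepR: "(norm (R n - z))\<^sup>2 \<le> (norm (x n - z))\<^sup>2 - c1 * (norm (r n))\<^sup>2 - c2 * (norm (B (x n) - B z))\<^sup>2"
    if zZ: "z \<in> Z" for n z
  proof -
    define d where "d = x n - z"
    define ee where "ee = J (\<gamma> n) (x n - \<gamma> n *\<^sub>R B (x n)) - z"
    define g where "g = B (x n) - B z"
    have Jz: "J (\<gamma> n) (z - \<gamma> n *\<^sub>R B z) = z" using fixJ[OF zZ gpos] .
    have firm: "(norm ee)\<^sup>2 \<le> inner ee (d - \<gamma> n *\<^sub>R g)"
    proof -
      have "(norm (J (\<gamma> n) (x n - \<gamma> n *\<^sub>R B (x n)) - J (\<gamma> n) (z - \<gamma> n *\<^sub>R B z)))\<^sup>2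
          \<le> inner (J (\<gamma> n) (x n - \<gamma> n *\<^sub>R B (x n)) - J (\<gamma> n) (z - \<gamma> n *\<^sub>R B z))
              ((x n - \<gamma> n *\<^sub>R B (x n)) - (z - \<gamma> n *\<^sub>R B z))"
        unfolding J_def by (rule res_firm[OF A_mm gpos])
      moreover have "(x n - \<gamma> n *\<^sub>R B (x n)) - (z - \<gamma> n *\<^sub>R B z) = d - \<gamma> n *\<^sub>R g"
        by (simp add: d_def g_def algebra_simps)
      ultimately show ?thesis unfolding Jz ee_def by simp
    qed
    have cg: "\<beta> * (norm g)\<^sup>2 \<le> inner d g" unfolding d_def g_def by (rule coco)
    have "(norm ((1 - lam n) *\<^sub>R d + lam n *\<^sub>R ee))\<^sup>2
        \<le> (norm d)\<^sup>2 - \<epsilon> ^ 3 / 2 * (norm (ee - d))\<^sup>2 - \<beta> * \<epsilon> ^ 4 / 2 * (norm g)\<^sup>2"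
      by (rule step_ineq[OF firm cg beta_pos eps(1) eps1(1) gge gle lge lle])
    moreover have "(1 - lam n) *\<^sub>R d + lam n *\<^sub>R ee = R n - z"
      by (simp add: d_def ee_def R_def r_def algebra_simps)
    moreover have "ee - d = r n" by (simp add: ee_def d_def r_def)
    ultimately show ?thesis by (simp add: d_def g_def c1_def c2_def)
  qed
  have Rle: "norm (R n - z) \<le> norm (x n - z)" if "z \<in> Z" for n z
  proof -
    have "(norm (R n - z))\<^sup>2 \<le> (norm (x n - z))\<^sup>2"
      using stepR[OF that, of n] c1pos c2pos
      by (smt (verit) mult_nonneg_nonneg zero_le_power2)
    then show ?thesis by (rule power2_le_imp_le) simp
  qed
  have Nst: "norm (x (Suc n) - z) \<le> norm (x n - z) + e n" if "z \<in> Z" for n z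
  proof -
    have "norm (x (Suc n) - z) \<le> norm (x (Suc n) - R n) + norm (R n - z)"
      using norm_triangle_ineq[of "x (Suc n) - R n" "R n - z"] by simp
    then show ?thesis using errR[of n] Rle[OF that, of n] by linarith
  qed
  have Mz: "norm (x n - z) \<le> norm (x 0 - z) + E" if "z \<in> Z" for n z
    unfolding E_def by (rule qf_bound[OF Nst[OF that] se e0])
  have fejconv: "convergent (\<lambda>n. norm (x n - z))" if "z \<in> Z" for z
    by (rule qf_conv[OF _ Nst[OF that] se e0]) simp
  have sumf: "summable (\<lambda>n. c1 * (norm (r n))\<^sup>2 + c2 * (norm (B (x n) - B z))\<^sup>2)" if zZ: "z \<in> Z" for z
  proof (rule summable_telescope_bound[where a = "\<lambda>n. (norm (x n - z))\<^sup>2"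
        and e = "\<lambda>n. 2 * (norm (x 0 - z) + E) * e n + (e n)\<^sup>2"])
    show "0 \<le> c1 * (norm (r n))\<^sup>2 + c2 * (norm (B (x n) - B z))\<^sup>2" for n
      using c1pos c2pos by simp
    show "0 \<le> (norm (x n - z))\<^sup>2" for n by simp
    have E0: "0 \<le> E" unfolding E_def using se e0 by (rule suminf_nonneg)
    show "summable (\<lambda>n. 2 * (norm (x 0 - z) + E) * e n + (e n)\<^sup>2)"
      using se summable_sq[OF se e0] by (intro summable_add summable_mult)
    show "0 \<le> 2 * (norm (x 0 - z) + E) * e n + (e n)\<^sup>2" for n using E0 e0[of n] by simp
    fix n
    define M where "M = norm (x 0 - z) + E"
    have RM: "norm (R n - z) \<le> M" using Rle[OF zZ, of n] Mz[OF zZ, of n] M_def by linarith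
    have "norm (x (Suc n) - z) \<le> norm (R n - z) + e n"
      using norm_triangle_ineq[of "x (Suc n) - R n" "R n - z"] errR[of n] by simp
    then have "(norm (x (Suc n) - z))\<^sup>2 \<le> (norm (R n - z) + e n)\<^sup>2" by (intro power_mono) auto
    also have "\<dots> = (norm (R n - z))\<^sup>2 + 2 * e n * norm (R n - z) + (e n)\<^sup>2"
      by (simp add: power2_sum algebra_simps)
    also have "2 * e n * norm (R n - z) \<le> 2 * e n * M" using RM e0[of n] by (intro mult_left_mono) auto
    finally have "(norm (x (Suc n) - z))\<^sup>2 \<le> (norm (R n - z))\<^sup>2 + 2 * e n * M + (e n)\<^sup>2" by simp
    then show "c1 * (norm (r n))\<^sup>2 + c2 * (norm (B (x n) - B z))\<^sup>2
        \<le> (norm (x n - z))\<^sup>2 - (norm (x (Suc n) - z))\<^sup>2 + (2 * (norm (x 0 - z) + E) * e n + (e n)\<^sup>2)"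
      using stepR[OF zZ, of n] unfolding M_def by (simp add: algebra_simps)
  qed
  obtain z0 where z0: "z0 \<in> Z" using zer_ne Z_def by blast
  have part1: "summable (\<lambda>n. (norm (r n))\<^sup>2)"
  proof (rule summable_comparison_test'[where N = 0])
    show "summable (\<lambda>n. (1 / c1) * (c1 * (norm (r n))\<^sup>2 + c2 * (norm (B (x n) - B z0))\<^sup>2))"
      using sumf[OF z0] by (rule summable_mult)
    fix n
    have "c1 * (norm (r n))\<^sup>2 \<le> c1 * (norm (r n))\<^sup>2 + c2 * (norm (B (x n) - B z0))\<^sup>2" using c2pos by simp
    then show "norm ((norm (r n))\<^sup>2) \<le> (1 / c1) * (c1 * (norm (r n))\<^sup>2 + c2 * (norm (B (x n) - B z0))\<^sup>2)"
      using c1pos by (simp add: field_simps)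
  qed
  have part2: "summable (\<lambda>n. (norm (B (x n) - B z))\<^sup>2)" if zZ: "z \<in> Z" for z
  proof (rule summable_comparison_test'[where N = 0])
    show "summable (\<lambda>n. (1 / c2) * (c1 * (norm (r n))\<^sup>2 + c2 * (norm (B (x n) - B z))\<^sup>2))"
      using sumf[OF zZ] by (rule summable_mult)
    fix n
    have "c2 * (norm (B (x n) - B z))\<^sup>2 \<le> c1 * (norm (r n))\<^sup>2 + c2 * (norm (B (x n) - B z))\<^sup>2" using c1pos by simp
    then show "norm ((norm (B (x n) - B z))\<^sup>2) \<le> (1 / c2) * (c1 * (norm (r n))\<^sup>2 + c2 * (norm (B (x n) - B z))\<^sup>2)"
      using c2pos by (simp add: field_simps)
  qed
  have r0: "r \<longlonglongrightarrow> 0" using part1 by (rule summable_sq_tendsto)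
  define T where "T p = J \<epsilon> (p - \<epsilon> *\<^sub>R B p)" for p
  have nexT: "norm (T p - T q) \<le> norm (p - q)" for p q
  proof -
    have "norm (T p - T q) \<le> norm ((p - \<epsilon> *\<^sub>R B p) - (q - \<epsilon> *\<^sub>R B q))"
      unfolding T_def J_def by (rule res_nonexp[OF A_mm eps(1)])
    also have "\<dots> \<le> norm (p - q)"
    proof -
      define d where "d = p - q"
      define g where "g = B p - B q"
      have "(p - \<epsilon> *\<^sub>R B p) - (q - \<epsilon> *\<^sub>R B q) = d - \<epsilon> *\<^sub>R g" by (simp add: d_def g_def algebra_simps)
      moreover have "(norm (d - \<epsilon> *\<^sub>R g))\<^sup>2 = (norm d)\<^sup>2 - 2 * \<epsilon> * inner d g + \<epsilon>\<^sup>2 * (norm g)\<^sup>2"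
        by (simp add: power2_norm_eq_inner inner_diff_left inner_diff_right inner_commute)
          (simp add: algebra_simps power2_eq_square)
      moreover have "\<beta> * (norm g)\<^sup>2 \<le> inner d g" unfolding d_def g_def by (rule coco)
      moreover have "\<epsilon>\<^sup>2 * (norm g)\<^sup>2 \<le> 2 * \<epsilon> * (\<beta> * (norm g)\<^sup>2)"
      proof -
        have "\<epsilon> * \<epsilon> \<le> \<epsilon> * (2 * \<beta>)" using eps1 eps by (intro mult_left_mono) auto
        then have "(\<epsilon> * \<epsilon>) * (norm g)\<^sup>2 \<le> (\<epsilon> * (2 * \<beta>)) * (norm g)\<^sup>2"
          by (rule mult_right_mono) simp
        then show ?thesis by (simp add: power2_eq_square algebra_simps)
      qed
      moreover have "2 * \<epsilon> * (\<beta> * (norm g)\<^sup>2) \<le> 2 * \<epsilon> * inner d g"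
        using calculation(3) eps by (intro mult_left_mono) auto
      ultimately have "(norm ((p - \<epsilon> *\<^sub>R B p) - (q - \<epsilon> *\<^sub>R B q)))\<^sup>2 \<le> (norm d)\<^sup>2" by simp
      then show ?thesis unfolding d_def by (rule power2_le_imp_le) simp
    qed
    finally show ?thesis .
  qed
  have TZ: "T z = z \<longleftrightarrow> z \<in> Z" for z
  proof
    assume "z \<in> Z" then show "T z = z" unfolding T_def using fixJ eps by blast
  next
    assume "T z = z"
    then have "J \<epsilon> (z - \<epsilon> *\<^sub>R B z) = z" by (simp add: T_def)
    then obtain u where "u \<in> A z" "z - \<epsilon> *\<^sub>R B z = z + \<epsilon> *\<^sub>R u"
      unfolding J_def res_char[OF A_mm eps(1)] by blast
    then have "\<epsilon> *\<^sub>R u = \<epsilon> *\<^sub>R (- B z)" by (simp add: algebra_simps eq_neg_iff_add_eq_0)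
    then have "u = - B z" using eps(1) by (metis scaleR_cancel_left less_irrefl)
    then show "z \<in> Z" using \<open>u \<in> A z\<close> Zchar by simp
  qed
  have arT: "(\<lambda>n. norm (x n - T (x n))) \<longlonglongrightarrow> 0"
  proof (rule tendsto_sandwich[where f = "\<lambda>n. 0" and h = "\<lambda>n. norm (r n)"])
    show "eventually (\<lambda>n. 0 \<le> norm (x n - T (x n))) sequentially" by simp
    show "eventually (\<lambda>n. norm (x n - T (x n)) \<le> norm (r n)) sequentially"
    proof (rule always_eventually, rule allI)
      fix n
      have "norm (x n - T (x n)) \<le> norm (x n - J (\<gamma> n) (x n - \<gamma> n *\<^sub>R B (x n)))"
        unfolding T_def J_def by (rule res_gamma_mono[OF A_mm eps(1) gge])
      then show "norm (x n - T (x n)) \<le> norm (r n)" by (simp add: r_def norm_minus_commute)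
    qed
    show "(\<lambda>n. norm (r n)) \<longlonglongrightarrow> 0" by (rule tendsto_norm_zero_iff[THEN iffD2, OF r0])
  qed simp
  have xbnd: "norm (x n) \<le> norm z0 + (norm (x 0 - z0) + E)" for n
    using norm_triangle_ineq[of "x n - z0" z0] Mz[OF z0, of n] by simp
  obtain c where Tc: "T c = c" and wc: "weak_conv x c"
    using weak_from_center[OF xbnd nexT arT] fejconv TZ by blast
  have cZ: "c \<in> Z" using Tc TZ by blast
  have Bx: "(\<lambda>n. B (x n)) \<longlonglongrightarrow> B c"
  proof -
    have "(\<lambda>n. B (x n) - B c) \<longlonglongrightarrow> 0" using part2[OF cZ] by (rule summable_sq_tendsto)
    then have "(\<lambda>n. (B (x n) - B c) + B c) \<longlonglongrightarrow> 0 + B c" by (intro tendsto_intros)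
    then show ?thesis by simp
  qed
  have part4: "\<exists>z\<in>Z. x \<longlonglongrightarrow> z"
    if H: "(\<forall>z \<in> Z. demiregular_at A z) \<or> (\<forall>z \<in> Z. demiregular_at (\<lambda>y. {B y}) z) \<or> interior Z \<noteq> {}"
  proof -
    consider (a) "\<forall>z \<in> Z. demiregular_at A z" | (b) "\<forall>z \<in> Z. demiregular_at (\<lambda>y. {B y}) z"
      | (c) "interior Z \<noteq> {}" using H by blast
    then show ?thesis
    proof cases
      case a
      then have dr: "demiregular_at A c" using cZ by blast
      define y where "y n = r n + x n" for n
      define us where "us n = (1 / \<gamma> n) *\<^sub>R ((x n - \<gamma> n *\<^sub>R B (x n)) - y n)" for n
      have yJ: "y n = J (\<gamma> n) (x n - \<gamma> n *\<^sub>R B (x n))" for n by (simp add: y_def r_def)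
      have gr: "(y n, us n) \<in> gra A" for n
        unfolding gra_def us_def yJ J_def using res_mem[OF A_mm gpos] by simp
      have wy: "weak_conv y c"
        unfolding weak_conv_def
      proof
        fix v
        have "(\<lambda>n. inner (r n) v + inner (x n) v) \<longlonglongrightarrow> inner 0 v + inner c v"
        proof (rule tendsto_add)
          show "(\<lambda>n. inner (r n) v) \<longlonglongrightarrow> inner 0 v" using r0 by (intro tendsto_intros)
          show "(\<lambda>n. inner (x n) v) \<longlonglongrightarrow> inner c v" using wc unfolding weak_conv_def by blast
        qed
        then show "(\<lambda>n. inner (y n) v) \<longlonglongrightarrow> inner c v" by (simp add: y_def inner_add_left)
      qed
      have usq: "us n = - ((1 / \<gamma> n) *\<^sub>R r n) - B (x n)" for n
        using gpos[of n] by (simp add: us_def y_def algebra_simps)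
      have sr: "(\<lambda>n. (1 / \<gamma> n) *\<^sub>R r n) \<longlonglongrightarrow> 0"
      proof (rule Lim_null_comparison[where g = "\<lambda>n. (1 / \<epsilon>) * norm (r n)"])
        show "eventually (\<lambda>n. norm ((1 / \<gamma> n) *\<^sub>R r n) \<le> (1 / \<epsilon>) * norm (r n)) sequentially"
        proof (rule always_eventually, rule allI)
          fix n
          have "1 / \<gamma> n \<le> 1 / \<epsilon>" using gge[of n] eps by (intro divide_left_mono) auto
          then show "norm ((1 / \<gamma> n) *\<^sub>R r n) \<le> (1 / \<epsilon>) * norm (r n)"
            using gpos[of n] mult_right_mono[OF \<open>1 / \<gamma> n \<le> 1 / \<epsilon>\<close> norm_ge_zero[of "r n"]] by simp
        qed
        have "(\<lambda>n. (1 / \<epsilon>) * norm (r n)) \<longlonglongrightarrow> (1 / \<epsilon>) * 0"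
          using tendsto_norm_zero_iff[THEN iffD2, OF r0] by (intro tendsto_intros)
        then show "(\<lambda>n. (1 / \<epsilon>) * norm (r n)) \<longlonglongrightarrow> 0" by simp
      qed
      have uslim: "us \<longlonglongrightarrow> - B c"
      proof -
        have "(\<lambda>n. - ((1 / \<gamma> n) *\<^sub>R r n) - B (x n)) \<longlonglongrightarrow> - 0 - B c" by (intro tendsto_intros sr Bx)
        moreover have "us = (\<lambda>n. - ((1 / \<gamma> n) *\<^sub>R r n) - B (x n))" using usq by (intro ext) simp
        ultimately show ?thesis by simp
      qed
      have "- B c \<in> A c" using cZ Zchar by blast
      then have "y \<longlonglongrightarrow> c" using dr gr wy uslim unfolding demiregular_at_def by blast
      then have "(\<lambda>n. y n - r n) \<longlonglongrightarrow> c - 0" using r0 by (intro tendsto_intros)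
      then have "x \<longlonglongrightarrow> c" by (simp add: y_def)
      then show ?thesis using cZ by blast
    next
      case b
      then have dr: "demiregular_at (\<lambda>y. {B y}) c" using cZ by blast
      have H: "\<forall>xs us u. (\<forall>n. (xs n, us n) \<in> gra (\<lambda>y. {B y})) \<and> u \<in> {B c} \<and> weak_conv xs c \<and> us \<longlonglongrightarrow> u
          \<longrightarrow> xs \<longlonglongrightarrow> c" using dr unfolding demiregular_at_def by blast
      have "x \<longlonglongrightarrow> c"
        using H[rule_format, of x "\<lambda>n. B (x n)" "B c"] wc Bx by (simp add: gra_def)
      then show ?thesis using cZ by blast
    next
      case c
      then obtain w0 where "w0 \<in> interior Z" by blast
      then obtain \<rho> where rho: "\<rho> > 0" "ball w0 \<rho> \<subseteq> Z" using mem_interior by blast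
      define \<rho>' where "\<rho>' = \<rho> / 2"
      have rho': "\<rho>' > 0" "\<rho>' < \<rho>" using rho by (auto simp: \<rho>'_def)
      have w0Z: "w0 \<in> Z" using rho by auto
      define M where "M = norm (x 0 - w0) + E + \<rho>'"
      have E0: "0 \<le> E" unfolding E_def using se e0 by (rule suminf_nonneg)
      have sdiff: "summable (\<lambda>n. 2 * \<rho>' * norm (x (Suc n) - x n))"
      proof (rule summable_telescope_bound[where a = "\<lambda>n. (norm (x n - w0))\<^sup>2"
            and e = "\<lambda>n. 2 * M * e n + (e n)\<^sup>2"])
        show "0 \<le> 2 * \<rho>' * norm (x (Suc n) - x n)" for n using rho' by simp
        show "0 \<le> (norm (x n - w0))\<^sup>2" for n by simp
        show "summable (\<lambda>n. 2 * M * e n + (e n)\<^sup>2)"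
          using se summable_sq[OF se e0] by (intro summable_add summable_mult)
        show "0 \<le> 2 * M * e n + (e n)\<^sup>2" for n using E0 e0[of n] rho' by (simp add: M_def)
        fix n
        define D where "D = x (Suc n) - x n"
        show "2 * \<rho>' * norm (x (Suc n) - x n) \<le> (norm (x n - w0))\<^sup>2 - (norm (x (Suc n) - w0))\<^sup>2 + (2 * M * e n + (e n)\<^sup>2)"
        proof (cases "D = 0")
          case True
          then show ?thesis using E0 e0[of n] rho' by (simp add: D_def M_def)
        next
          case False
          define dd where "dd = (1 / norm D) *\<^sub>R D"
          have ndd: "norm dd = 1" using False by (simp add: dd_def)
          define w where "w = w0 - \<rho>' *\<^sub>R dd"
          have "dist w0 w < \<rho>" using ndd rho' by (simp add: w_def dist_norm)
          then have wZ: "w \<in> Z" using rho by auto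
          have nw: "norm (x n - w) \<le> M"
          proof -
            have "norm (x n - w) \<le> norm (x n - w0) + norm (\<rho>' *\<^sub>R dd)"
              using norm_triangle_ineq[of "x n - w0" "\<rho>' *\<^sub>R dd"] by (simp add: w_def algebra_simps)
            then show ?thesis using Mz[OF w0Z, of n] ndd rho' by (simp add: M_def)
          qed
          have "(norm (x (Suc n) - w))\<^sup>2 \<le> (norm (x n - w) + e n)\<^sup>2"
            using Nst[OF wZ, of n] by (intro power_mono) auto
          also have "\<dots> = (norm (x n - w))\<^sup>2 + 2 * e n * norm (x n - w) + (e n)\<^sup>2"
            by (simp add: power2_sum algebra_simps)
          also have "2 * e n * norm (x n - w) \<le> 2 * e n * M" using nw e0[of n] by (intro mult_left_mono) auto
          finally have ineq: "(norm (x (Suc n) - w))\<^sup>2 \<le> (norm (x n - w))\<^sup>2 + 2 * M * e n + (e n)\<^sup>2"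
            by (simp add: mult.commute mult.left_commute)
          have expw: "(norm (p - w))\<^sup>2 = (norm (p - w0))\<^sup>2 + 2 * \<rho>' * inner (p - w0) dd + \<rho>'\<^sup>2" for p
          proof -
            define q where "q = p - w0"
            have eq: "p - w = q + \<rho>' *\<^sub>R dd" by (simp add: w_def q_def algebra_simps)
            have "(norm (p - w))\<^sup>2 = (norm (q + \<rho>' *\<^sub>R dd))\<^sup>2" by (simp only: eq)
            also have "\<dots> = (norm q)\<^sup>2 + 2 * \<rho>' * inner q dd + \<rho>'\<^sup>2 * (norm dd)\<^sup>2"
              by (simp add: power2_norm_eq_inner inner_add_left inner_add_right inner_commute)
                (simp add: algebra_simps power2_eq_square)
            finally show ?thesis using ndd by (simp add: q_def)
          qed
          have "inner (x (Suc n) - w0) dd - inner (x n - w0) dd = inner D dd"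
            by (simp add: D_def inner_diff_left)
          also have "inner D dd = norm D"
            using False by (simp add: dd_def power2_norm_eq_inner[symmetric] power2_eq_square)
          finally have id: "inner (x (Suc n) - w0) dd - inner (x n - w0) dd = norm D" .
          have "2 * \<rho>' * inner (x (Suc n) - w0) dd - 2 * \<rho>' * inner (x n - w0) dd = 2 * \<rho>' * norm D"
            using id by (simp add: algebra_simps)
          then show ?thesis using ineq expw[of "x (Suc n)"] expw[of "x n"] unfolding D_def by linarith
        qed
      qed
      then have "summable (\<lambda>n. (1 / (2 * \<rho>')) * (2 * \<rho>' * norm (x (Suc n) - x n)))"
        by (rule summable_mult)
      then have "summable (\<lambda>n. norm (x (Suc n) - x n))" using rho' by simp
      then have sN: "summable (\<lambda>n. norm (x (Suc n) - x n))" .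
      define S where "S m = (\<Sum>k<m. norm (x (Suc k) - x k))" for m
      have SC: "Cauchy S" unfolding S_def using summable_LIMSEQ[OF sN] by (rule LIMSEQ_imp_Cauchy)
      have est: "norm (x m - x n) \<le> S m - S n" if "n \<le> m" for m n
      proof -
        have "x m - x n = (\<Sum>k = n..<m. x (Suc k) - x k)" using sum_Suc_diff'[OF that, of x] by simp
        then have "norm (x m - x n) \<le> (\<Sum>k = n..<m. norm (x (Suc k) - x k))"
          by (simp add: norm_sum)
        also have "\<dots> = S m - S n"
          unfolding S_def using sum.atLeastLessThan_concat[OF _ that, of 0 "\<lambda>k. norm (x (Suc k) - x k)"]
          by (simp add: lessThan_atLeast0)
        finally show ?thesis .
      qed
      have "Cauchy x"
        unfolding Cauchy_def
      proof (intro allI impI)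
        fix \<eta> :: real assume "\<eta> > 0"
        then obtain N where N: "\<And>m n. m \<ge> N \<Longrightarrow> n \<ge> N \<Longrightarrow> dist (S m) (S n) < \<eta>"
          using SC unfolding Cauchy_def by blast
        show "\<exists>M. \<forall>m\<ge>M. \<forall>n\<ge>M. dist (x m) (x n) < \<eta>"
        proof (intro exI allI impI)
          fix m n assume mn: "N \<le> m" "N \<le> n"
          show "dist (x m) (x n) < \<eta>"
          proof (cases "n \<le> m")
            case True
            then have "dist (x m) (x n) \<le> S m - S n" using est by (simp add: dist_norm)
            also have "\<dots> \<le> dist (S m) (S n)" by (simp add: dist_real_def)
            finally show ?thesis using N[OF mn] by linarith
          next
            case False
            then have "dist (x n) (x m) \<le> S n - S m" using est by (simp add: dist_norm)
            also have "\<dots> \<le> dist (S n) (S m)" by (simp add: dist_real_def)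
            finally show ?thesis using N[OF mn(2) mn(1)] by (simp add: dist_commute)
          qed
        qed
      qed
      then obtain xs where xl': "x \<longlonglongrightarrow> xs" using convergent_eq_Cauchy by blast
      have Tl: "(\<lambda>n. T (x n)) \<longlonglongrightarrow> T xs"
      proof (rule LIM_zero_cancel, rule Lim_null_comparison[where g = "\<lambda>n. norm (x n - xs)"])
        show "eventually (\<lambda>n. norm (T (x n) - T xs) \<le> norm (x n - xs)) sequentially" using nexT by simp
        show "(\<lambda>n. norm (x n - xs)) \<longlonglongrightarrow> 0" by (rule tendsto_norm_zero_iff[THEN iffD2, OF LIM_zero[OF xl']])
      qed
      have "(\<lambda>n. x n - T (x n)) \<longlonglongrightarrow> 0" by (rule tendsto_norm_zero_iff[THEN iffD1, OF arT])
      then have "(\<lambda>n. x n - (x n - T (x n))) \<longlonglongrightarrow> xs - 0" using xl' by (intro tendsto_intros)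
      then have "(\<lambda>n. T (x n)) \<longlonglongrightarrow> xs" by simp
      then have "T xs = xs" using Tl LIMSEQ_unique by blast
      then show ?thesis using TZ xl' by blast
    qed
  qed
  have p1: "summable (\<lambda>n. (norm (resolvent (op_scale (\<gamma> n) A) (x n - \<gamma> n *\<^sub>R B (x n)) - x n))\<^sup>2)"
    using part1 unfolding r_def J_def .
  have p2: "\<forall>z \<in> zer (op_plus A B). summable (\<lambda>n. (norm (B (x n) - B z))\<^sup>2)"
    using part2 unfolding Z_def by blast
  have p3: "\<exists>z \<in> zer (op_plus A B). weak_conv x z" using cZ wc unfolding Z_def by blast
  show ?thesis
  proof (intro conjI impI)
    show "summable (\<lambda>n. (norm (resolvent (op_scale (\<gamma> n) A) (x n - \<gamma> n *\<^sub>R B (x n)) - x n))\<^sup>2)" by (rule p1)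
    show "\<forall>z \<in> zer (op_plus A B). summable (\<lambda>n. (norm (B (x n) - B z))\<^sup>2)" by (rule p2)
    show "\<exists>z \<in> zer (op_plus A B). weak_conv x z" by (rule p3)
    assume "(\<forall>z \<in> zer (op_plus A B). demiregular_at A z)
         \<or> (\<forall>z \<in> zer (op_plus A B). demiregular_at (\<lambda>y. {B y}) z)
         \<or> interior (zer (op_plus A B)) \<noteq> {}"
    then show "\<exists>z \<in> zer (op_plus A B). x \<longlonglongrightarrow> z" using part4 unfolding Z_def by blast
  qed
qed

end
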